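(* In any execution of the algorithm described in the context in which some non-faulty process decides, let $r$ be the smallest round in which a non-faulty process decides. Then every non-faulty process decides in either round $r$ or round $r+2$.
   Context: Model. There are $n$ processes $p_1,\dots,p_n$ ($i$ is the index of $p_i$) communicating over an asynchronous, reliable, point-to-point network: every pair of processes is connected by a channel, message delays are finite but unbounded, and the network does not lose, duplicate, modify or create messages. "Broadcast" means sending the message to every process (including oneself). Messages are signed with unforgeable digital signatures ($\langle m\rangle_j$ denotes message $m$ signed by $p_j$); malformed messages or messages with invalid signatures are ignored. Up to $t$ processes are Byzantine (faulty) and may behave arbitrarily and collude, but cannot forge signatures of other processes; the remaining processes are non-faulty and follow the algorithm. It is assumed that $t<n/3$. Algorithm. Messages are of the form $\mathrm{AUX}[r](v)$ with round $r\in\mathbb{N}$ and $v\in\{0,1\}$, sent as a pair $(\langle \mathrm{AUX}[r](v)\rangle_j,\mathit{proofs})$ where $\mathit{proofs}$ is a set of signed AUX messages. The predicate $\mathsf{is\_valid}(r,est,\mathit{proofs})$ is: if $r=0$ return true; if $r=1$ return true iff $\mathit{proofs}$ contains signed $\mathrm{AUX}[0](est)$ messages from $t+1$ different processes; otherwise let $b=(r-1)\bmod 2$; if $est=b$, return true iff ($r=2$ and $\mathit{proofs}$ contains signed $\mathrm{AUX}[0](b)$ from $t+1$ different processes) or ($\mathit{proofs}$ contains signed $\mathrm{AUX}[r-2](b)$ from $n-t$ different processes); if $est\neq b$, return true iff $\mathit{proofs}$ contains signed $\mathrm{AUX}[r-1](\neg b)$ from $n-t$ different processes. Each process $p_i$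 with proposal $v_i$ keeps a round counter $r_i$, a set $\mathit{aux\_values}_i$ of signed AUX messages, and timers indexed by naturals (timers $2r$ and $2r+1$ belong to round $r$; starting an already started or expired timer does nothing). It sets $r_i:=0$, $\mathit{aux\_values}_i:=\emptyset$, broadcasts $(\langle\mathrm{AUX}[0](v_i)\rangle_i,\emptyset)$, then repeats forever: (1) $r_i:=r_i+1$; (2) if $i=r_i\bmod n$ (coordinator), run Broadcast; (3) start timer $2r_i$ and wait until it expires; (4) if $i\ne r_i\bmod n$, run Broadcast; (5) wait until $\mathit{aux\_values}_i$ contains round-$r_i$ AUX messages from $n-t$ different processes; (6) start timer $2r_i+1$ and wait until it expires; (7) with $b_i=r_i\bmod 2$, if $\mathit{aux\_values}_i$ contains $\mathrm{AUX}[r_i](b_i)$ from $n-t$ different processes, decide $b_i$ (if not yet decided); a process decides in round $r$ if it decides at this step with $r_i=r$. Broadcast: let $\mathit{values}_i$ be the set of $v\in\{0,1\}$ such that $\mathsf{is\_valid}(r_i,v,S)$ holds for some $S\subseteq\mathit{aux\_values}_i$; let $bv=(r_i+1)\bmod 2$; if $p_i$ received from $p_{r_i\bmod n}$ a message $(\langle\mathrm{AUX}[r_i](p)\rangle_{r_i\bmod n},\cdot)$ with $p\in\mathit{values}_i$ then $est_i:=p$, else if $bv\in\mathit{values}_i$ then $est_i:=bv$, else $est_i:=\neg bv$; choose $\mathit{proofs}\subseteq\mathit{aux\_values}_i$ with $\mathsf{is\_valid}(r_i,est_i,\mathit{proofs})$ and broadcast $(\langle\mathrm{AUX}[r_i](est_i)\rangle_i,\mathit{proofs})$.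 On receiving $(\langle\mathrm{AUX}[r_j](est_j)\rangle_j,\mathit{proofs})$: if $\mathsf{is\_valid}(r_j,est_j,\mathit{proofs})$, add the signed message and the messages of $\mathit{proofs}$ needed to satisfy the predicate to $\mathit{aux\_values}_i$ (such messages are called valid). Then let $\rho_i$ be the largest round for which $\mathit{aux\_values}_i$ contains messages from $t+1$ different processes, and set every timer with index $\le 2\rho_i$ to expired. *)

theory Defs
  imports Main
begin

text \<open>Binary values are the naturals 0 and 1.
  Processes are identified with the indices 0..n-1 (so that the coordinator of round r is
  the process with index r mod n).\<close>
datatype signed = AUX (signer: nat) (rnd: nat) (vl: nat)

text \<open>A message on the wire: the signed AUX message together with its set of proofs.\<close>
type_synonym msg = "signed \<times> signed set"

text \<open>A packet in transit: (unique tag, sender, destination, message).\<close>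
type_synonym packet = "nat \<times> nat \<times> nat \<times> msg"

definition pdst :: "packet \<Rightarrow> nat" where "pdst pk = fst (snd (snd pk))"

definition signers :: "signed set \<Rightarrow> nat \<Rightarrow> nat \<Rightarrow> nat set" where
  "signers S r v = {j. AUX j r v \<in> S}"

definition rsigners :: "signed set \<Rightarrow> nat \<Rightarrow> nat set" where
  "rsigners S r = {j. \<exists>v. AUX j r v \<in> S}"

definition is_valid :: "nat \<Rightarrow> nat \<Rightarrow> nat \<Rightarrow> nat \<Rightarrow> signed set \<Rightarrow> bool" where
  "is_valid n t r est proofs =
    (if r = 0 then True
     else if r = 1 then card (signers proofs 0 est) \<ge> t + 1
     else (let b = (r - 1) mod 2 in
       if est = b then
         (r = 2 \<and> card (signers proofs 0 b) \<ge> t + 1) \<or> card (signers proofs (r - 2) b) \<ge> n - t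
       else card (signers proofs (r - 1) (1 - b)) \<ge> n - t))"

text \<open>The messages of proofs needed to satisfy the predicate (those of the kind the
  predicate counts).\<close>
definition needed :: "nat \<Rightarrow> nat \<Rightarrow> signed set \<Rightarrow> signed set" where
  "needed r est proofs =
    (if r = 0 then {}
     else if r = 1 then {m \<in> proofs. rnd m = 0 \<and> vl m = est}
     else if est = (r - 1) mod 2 then {m \<in> proofs. rnd m = r - 2 \<and> vl m = est}
     else {m \<in> proofs. rnd m = r - 1 \<and> vl m = est})"

definition wf_signed :: "nat \<Rightarrow> signed \<Rightarrow> bool" where
  "wf_signed n m = (signer m < n \<and> vl m \<le> 1)"

datatype pcv = PStart | PWait1 | PWait2 | PWait3
datatype tstate = Idle | Running | Expired

record lstate =
  pc :: pcv
  rd :: nat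
  auxv :: "signed set"
  rcvd :: "(nat \<times> signed) set"   \<comment> \<open>(sender, signed part) of every received message\<close>
  tmr :: "nat \<Rightarrow> tstate"
  decided :: "nat option"          \<comment> \<open>Some r iff the process decided in round r\<close>

record gstate =
  loc :: "nat \<Rightarrow> lstate"
  net :: "packet set"
  sigs :: "signed set"             \<comment> \<open>all AUX messages signed so far by non-faulty processes\<close>

definition start_timer :: "nat \<Rightarrow> (nat \<Rightarrow> tstate) \<Rightarrow> nat \<Rightarrow> tstate" where
  "start_timer j tm = (if tm j = Idle then tm(j := Running) else tm)"

definition valid_vals :: "nat \<Rightarrow> nat \<Rightarrow> nat \<Rightarrow> signed set \<Rightarrow> nat set" where
  "valid_vals n t r S = {v. v \<le> 1 \<and> (\<exists>S'\<subseteq>S. finite S' \<and> is_valid n t r v S')}"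

text \<open>Admissible choices (est, proofs) of procedure Broadcast in round r.\<close>
definition bcast_ok :: "nat \<Rightarrow> nat \<Rightarrow> nat \<Rightarrow> lstate \<Rightarrow> nat \<Rightarrow> signed set \<Rightarrow> bool" where
  "bcast_ok n t r l est ps =
    (let vals = valid_vals n t r (auxv l); c = r mod n; bv = (r + 1) mod 2 in
      (if \<exists>p\<in>vals. (c, AUX c r p) \<in> rcvd l
       then est \<in> vals \<and> (c, AUX c r est) \<in> rcvd l
       else if bv \<in> vals then est = bv else est = 1 - bv)
      \<and> ps \<subseteq> auxv l \<and> finite ps \<and> is_valid n t r est ps)"

definition upd_loc :: "gstate \<Rightarrow> nat \<Rightarrow> lstate \<Rightarrow> gstate" where
  "upd_loc s i l = s\<lparr>loc := (loc s)(i := l)\<rparr>"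

definition send_bcast :: "nat \<Rightarrow> nat \<Rightarrow> nat \<Rightarrow> nat \<Rightarrow> nat \<Rightarrow> signed set \<Rightarrow> gstate \<Rightarrow> gstate" where
  "send_bcast n k i r est ps s =
     s\<lparr>net := net s \<union> {(Suc k, i, d, (AUX i r est, ps)) | d. d < n},
       sigs := insert (AUX i r est) (sigs s)\<rparr>"

definition local_step :: "nat \<Rightarrow> nat \<Rightarrow> nat \<Rightarrow> nat \<Rightarrow> gstate \<Rightarrow> gstate \<Rightarrow> bool" where
  "local_step n t k i s s' =
    (let l = loc s i; r = rd l in
     (pc l = PStart \<and>
        (let r' = Suc r; l1 = l\<lparr>rd := r', tmr := start_timer (2 * r') (tmr l), pc := PWait1\<rparr> in
         if i = r' mod n
         then (\<exists>est ps. bcast_ok n t r' l est ps \<and> s' = send_bcast n k i r' est ps (upd_loc s i l1))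
         else s' = upd_loc s i l1))
   \<or> (pc l = PWait1 \<and> tmr l (2 * r) = Expired \<and>
        (let l1 = l\<lparr>pc := PWait2\<rparr> in
         if i \<noteq> r mod n
         then (\<exists>est ps. bcast_ok n t r l est ps \<and> s' = send_bcast n k i r est ps (upd_loc s i l1))
         else s' = upd_loc s i l1))
   \<or> (pc l = PWait2 \<and> card (rsigners (auxv l) r) \<ge> n - t \<and>
        s' = upd_loc s i (l\<lparr>tmr := start_timer (2 * r + 1) (tmr l), pc := PWait3\<rparr>))
   \<or> (pc l = PWait3 \<and> tmr l (2 * r + 1) = Expired \<and>
        s' = upd_loc s i (l\<lparr>decided := (if card (signers (auxv l) r (r mod 2)) \<ge> n - t \<and> decided l = None
                                          then Some r else decided l),
                             pc := PStart\<rparr>)))"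

definition receive :: "nat \<Rightarrow> nat \<Rightarrow> packet \<Rightarrow> lstate \<Rightarrow> lstate" where
  "receive n t pk l =
    (case pk of (tg, src, d, (m, ps)) \<Rightarrow>
      (let A' = (if is_valid n t (rnd m) (vl m) ps then auxv l \<union> {m} \<union> needed (rnd m) (vl m) ps
                 else auxv l) in
       l\<lparr>rcvd := insert (src, m) (rcvd l), auxv := A',
         tmr := (\<lambda>j. if \<exists>\<rho>. j \<le> 2 * \<rho> \<and> card (rsigners A' \<rho>) \<ge> t + 1 then Expired else tmr l j)\<rparr>))"

datatype action =
    Local nat
  | Deliver packet
  | Expire nat nat
  | ByzSend nat nat signed "signed set"
  | Skip

text \<open>Transition relation; F is the set of faulty processes, k is the global time.\<close>
definition step :: "nat \<Rightarrow> nat \<Rightarrow> nat set \<Rightarrow> nat \<Rightarrow> action \<Rightarrow> gstate \<Rightarrow> gstate \<Rightarrow> bool" where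
  "step n t F k a s s' =
    (case a of
       Local i \<Rightarrow> i < n \<and> i \<notin> F \<and> local_step n t k i s s'
     | Deliver pk \<Rightarrow> pk \<in> net s \<and>
         (if pdst pk \<notin> F
          then s' = s\<lparr>loc := (loc s)(pdst pk := receive n t pk (loc s (pdst pk))), net := net s - {pk}\<rparr>
          else s' = s\<lparr>net := net s - {pk}\<rparr>)
     | Expire i j \<Rightarrow> i < n \<and> i \<notin> F \<and> tmr (loc s i) j = Running \<and>
         s' = upd_loc s i ((loc s i)\<lparr>tmr := (tmr (loc s i))(j := Expired)\<rparr>)
     | ByzSend j d m ps \<Rightarrow> j \<in> F \<and> d < n \<and> finite ps \<and>
         (\<forall>x \<in> insert m ps. wf_signed n x \<and> (signer x \<notin> F \<longrightarrow> x \<in> sigs s)) \<and>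
         s' = s\<lparr>net := insert (Suc k, j, d, (m, ps)) (net s)\<rparr>
     | Skip \<Rightarrow> s' = s)"

text \<open>Initial configuration: every non-faulty process i has broadcast AUX[0](v i) with empty proofs.\<close>
definition init :: "nat \<Rightarrow> nat set \<Rightarrow> (nat \<Rightarrow> nat) \<Rightarrow> gstate" where
  "init n F v =
    \<lparr>loc = (\<lambda>i. \<lparr>pc = PStart, rd = 0, auxv = {}, rcvd = {}, tmr = (\<lambda>_. Idle), decided = None\<rparr>),
     net = {(0, i, d, (AUX i 0 (v i), {})) | i d. i < n \<and> i \<notin> F \<and> d < n},
     sigs = {AUX i 0 (v i) | i. i < n \<and> i \<notin> F}\<rparr>"

definition fair_execution ::
  "nat \<Rightarrow> nat \<Rightarrow> nat set \<Rightarrow> (nat \<Rightarrow> nat) \<Rightarrow> (nat \<Rightarrow> gstate) \<Rightarrow> (nat \<Rightarrow> action) \<Rightarrow> bool" where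
  "fair_execution n t F v s a =
    (s 0 = init n F v
     \<and> (\<forall>k. step n t F k (a k) (s k) (s (Suc k)))
     \<and> (\<forall>k pk. pk \<in> net (s k) \<and> pdst pk \<notin> F \<longrightarrow> (\<exists>k'\<ge>k. pk \<notin> net (s k')))
     \<and> (\<forall>k i j. i < n \<and> i \<notin> F \<and> tmr (loc (s k) i) j = Running \<longrightarrow>
                 (\<exists>k'\<ge>k. tmr (loc (s k') i) j = Expired))
     \<and> (\<forall>k i. i < n \<and> i \<notin> F \<and> (\<exists>s'. local_step n t k i (s k) s') \<longrightarrow>
                 (\<exists>k'\<ge>k. a k' = Local i)))"

end

theory Submission
  imports Defs
begin

definition Good :: "nat \<Rightarrow> nat set \<Rightarrow> signed set \<Rightarrow> signed set \<Rightarrow> bool" where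
  "Good n F SG X \<longleftrightarrow> (\<forall>y\<in>X. wf_signed n y \<and> (signer y \<notin> F \<longrightarrow> y \<in> SG))"

definition pkt_ok :: "nat \<Rightarrow> nat set \<Rightarrow> signed set \<Rightarrow> packet \<Rightarrow> bool" where
  "pkt_ok n F SG pk = (case pk of (tg, src, d, m, ps) \<Rightarrow> Good n F SG (insert m ps))"

definition justified :: "nat \<Rightarrow> nat \<Rightarrow> nat set \<Rightarrow> signed set \<Rightarrow> signed \<Rightarrow> bool" where
  "justified n t F SG m \<longleftrightarrow> (\<exists>j \<rho> x ps. is_valid n t \<rho> x ps \<and> Good n F SG ps \<and> m \<in> insert (AUX j \<rho> x) (needed \<rho> x ps))"

definition sig_ok :: "nat \<Rightarrow> nat \<Rightarrow> nat set \<Rightarrow> gstate \<Rightarrow> nat \<Rightarrow> nat \<Rightarrow> nat \<Rightarrow> bool" where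
  "sig_ok n t F s j \<rho> x \<longleftrightarrow> \<rho> \<le> rd (loc s j) \<and> (\<exists>tg ps. finite ps \<and> is_valid n t \<rho> x ps \<and> Good n F (sigs s) ps \<and>
     (\<forall>d<n. d \<notin> F \<longrightarrow> (tg, j, d, (AUX j \<rho> x, ps)) \<in> net s \<or> insert (AUX j \<rho> x) (needed \<rho> x ps) \<subseteq> auxv (loc s d)))"

definition procinv :: "nat \<Rightarrow> nat \<Rightarrow> nat set \<Rightarrow> signed set \<Rightarrow> nat \<Rightarrow> lstate \<Rightarrow> bool" where
  "procinv n t F SG i l \<longleftrightarrow>
     Good n F SG (auxv l) \<and> (\<forall>m\<in>auxv l. justified n t F SG m)
   \<and> (pc l = PWait1 \<longrightarrow> i \<noteq> rd l mod n \<longrightarrow> (\<forall>x. AUX i (rd l) x \<notin> SG))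
   \<and> (pc l \<noteq> PStart \<longrightarrow> 1 \<le> rd l \<and> tmr l (2 * rd l) \<noteq> Idle)
   \<and> (pc l = PWait3 \<longrightarrow> tmr l (2 * rd l + 1) \<noteq> Idle \<and> n - t \<le> card (rsigners (auxv l) (rd l)))
   \<and> (\<forall>\<rho>. decided l = Some \<rho> \<longrightarrow> 1 \<le> \<rho> \<and> \<rho> \<le> rd l \<and> n - t \<le> card (signers (auxv l) \<rho> (\<rho> mod 2)))
   \<and> (\<forall>\<rho><rd l. \<exists>x. AUX i \<rho> x \<in> SG)
   \<and> ((pc l \<noteq> PWait1 \<or> i = rd l mod n) \<longrightarrow> (\<exists>x. AUX i (rd l) x \<in> SG))"

definition ginv :: "nat \<Rightarrow> nat \<Rightarrow> nat set \<Rightarrow> gstate \<Rightarrow> bool" where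
  "ginv n t F s \<longleftrightarrow>
     (\<forall>pk\<in>net s. pkt_ok n F (sigs s) pk)
   \<and> (\<forall>m\<in>sigs s. signer m \<notin> F \<and> wf_signed n m)
   \<and> (\<forall>j \<rho> x. AUX j \<rho> x \<in> sigs s \<longrightarrow> sig_ok n t F s j \<rho> x)
   \<and> (\<forall>j \<rho> x y. AUX j \<rho> x \<in> sigs s \<longrightarrow> AUX j \<rho> y \<in> sigs s \<longrightarrow> x = y)
   \<and> (\<forall>i<n. i \<notin> F \<longrightarrow> procinv n t F (sigs s) i (loc s i))"

lemma Good_mono: "Good n F A X \<Longrightarrow> A \<subseteq> B \<Longrightarrow> Good n F B X"
  unfolding Good_def by blast

lemma Good_sub: "Good n F A X \<Longrightarrow> Y \<subseteq> X \<Longrightarrow> Good n F A Y"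
  unfolding Good_def by blast

lemma justified_mono: "justified n t F A m \<Longrightarrow> A \<subseteq> B \<Longrightarrow> justified n t F B m"
  unfolding justified_def using Good_mono by blast

lemma signers_sub: "Good n F A X \<Longrightarrow> signers X r v \<subseteq> {..<n}"
  unfolding Good_def signers_def wf_signed_def by force

lemma rsigners_sub: "Good n F A X \<Longrightarrow> rsigners X r \<subseteq> {..<n}"
  unfolding Good_def rsigners_def wf_signed_def by force

lemma card_signers_mono: "Good n F A Y \<Longrightarrow> X \<subseteq> Y \<Longrightarrow> card (signers X r v) \<le> card (signers Y r v)"
  apply (rule card_mono)
   apply (meson finite_lessThan finite_subset signers_sub)
  unfolding signers_def by blast

lemma card_rsigners_mono: "Good n F A Y \<Longrightarrow> X \<subseteq> Y \<Longrightarrow> card (rsigners X r) \<le> card (rsigners Y r)"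
  apply (rule card_mono)
   apply (meson finite_lessThan finite_subset rsigners_sub)
  unfolding rsigners_def by blast

lemma needed_sub: "needed r est ps \<subseteq> ps"
  unfolding needed_def by auto

lemma upd_loc_simps[simp]:
  "loc (upd_loc s i l) = (loc s)(i := l)" "net (upd_loc s i l) = net s" "sigs (upd_loc s i l) = sigs s"
  unfolding upd_loc_def by auto

lemma send_bcast_simps[simp]:
  "loc (send_bcast n k i r est ps s) = loc s"
  "net (send_bcast n k i r est ps s) = net s \<union> {(Suc k, i, d, (AUX i r est, ps)) | d. d < n}"
  "sigs (send_bcast n k i r est ps s) = insert (AUX i r est) (sigs s)"
  unfolding send_bcast_def by auto

lemma procinv_mono:
  assumes "procinv n t F A j l" "A \<subseteq> B" "\<forall>m\<in>B - A. signer m \<noteq> j"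
  shows "procinv n t F B j l"
proof -
  have "\<And>x. AUX j (rd l) x \<in> B \<Longrightarrow> AUX j (rd l) x \<in> A" using assms(3) by force
  then show ?thesis using assms(1,2) Good_mono justified_mono unfolding procinv_def by (smt (verit) subsetD)
qed

lemma sig_ok_mono:
  assumes "sig_ok n t F s j \<rho> x" "rd (loc s j) \<le> rd (loc s' j)" "sigs s \<subseteq> sigs s'" "net s \<subseteq> net s'"
    "\<And>d. d < n \<Longrightarrow> d \<notin> F \<Longrightarrow> auxv (loc s d) \<subseteq> auxv (loc s' d)"
  shows "sig_ok n t F s' j \<rho> x"
proof -
  obtain tg ps where h1: "finite ps" "is_valid n t \<rho> x ps" "Good n F (sigs s) ps"
    and h2: "\<forall>d<n. d \<notin> F \<longrightarrow> (tg, j, d, (AUX j \<rho> x, ps)) \<in> net s \<or> insert (AUX j \<rho> x) (needed \<rho> x ps) \<subseteq> auxv (loc s d)"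
    using assms(1) unfolding sig_ok_def by blast
  have h3: "\<rho> \<le> rd (loc s' j)" using assms(1,2) unfolding sig_ok_def by auto
  show ?thesis unfolding sig_ok_def
  proof (intro conjI exI[of _ tg] exI[of _ ps])
    show "\<forall>d<n. d \<notin> F \<longrightarrow> (tg, j, d, (AUX j \<rho> x, ps)) \<in> net s' \<or> insert (AUX j \<rho> x) (needed \<rho> x ps) \<subseteq> auxv (loc s' d)"
    proof (intro allI impI)
      fix d assume d: "d < n" "d \<notin> F"
      then have "(tg, j, d, (AUX j \<rho> x, ps)) \<in> net s \<or> insert (AUX j \<rho> x) (needed \<rho> x ps) \<subseteq> auxv (loc s d)" using h2 by blast
      then show "(tg, j, d, (AUX j \<rho> x, ps)) \<in> net s' \<or> insert (AUX j \<rho> x) (needed \<rho> x ps) \<subseteq> auxv (loc s' d)"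
        using assms(4) assms(5)[OF d] by blast
    qed
    show "Good n F (sigs s') ps" using h1(3) assms(3) Good_mono by blast
  qed (use h1 h3 in auto)
qed

lemma pkt_ok_mono: "pkt_ok n F A pk \<Longrightarrow> A \<subseteq> B \<Longrightarrow> pkt_ok n F B pk"
  unfolding pkt_ok_def using Good_mono by (cases pk) auto

lemma inv_upd:
  assumes "ginv n t F s" "i < n" "i \<notin> F" "auxv (loc s i) \<subseteq> auxv l'" "rd (loc s i) \<le> rd l'"
    "procinv n t F (sigs s) i l'"
  shows "ginv n t F (upd_loc s i l')"
proof -
  have "sig_ok n t F (upd_loc s i l') j \<rho> x" if "AUX j \<rho> x \<in> sigs s" for j \<rho> x
    apply (rule sig_ok_mono[of n t F s])
    using assms(1) that assms(4,5) unfolding ginv_def by auto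
  then show ?thesis using assms unfolding ginv_def by auto
qed

lemma ginvD:
  assumes "ginv n t F s"
  shows "\<And>pk. pk \<in> net s \<Longrightarrow> pkt_ok n F (sigs s) pk"
    "\<And>m. m \<in> sigs s \<Longrightarrow> signer m \<notin> F \<and> wf_signed n m"
    "\<And>j \<rho> x. AUX j \<rho> x \<in> sigs s \<Longrightarrow> sig_ok n t F s j \<rho> x"
    "\<And>j \<rho> x y. AUX j \<rho> x \<in> sigs s \<Longrightarrow> AUX j \<rho> y \<in> sigs s \<Longrightarrow> x = y"
    "\<And>i. i < n \<Longrightarrow> i \<notin> F \<Longrightarrow> procinv n t F (sigs s) i (loc s i)"
  using assms unfolding ginv_def by blast+

lemma inv_send:
  assumes "ginv n t F s" "i < n" "i \<notin> F" "auxv (loc s i) \<subseteq> auxv l'" "rd (loc s i) \<le> rd l'" "r \<le> rd l'"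
    "\<forall>x. AUX i r x \<notin> sigs s" "ps \<subseteq> auxv (loc s i)" "finite ps" "is_valid n t r est ps" "est \<le> 1"
    "procinv n t F (insert (AUX i r est) (sigs s)) i l'"
  shows "ginv n t F (send_bcast n k i r est ps (upd_loc s i l'))"
proof -
  let ?s = "send_bcast n k i r est ps (upd_loc s i l')"
  let ?SG = "insert (AUX i r est) (sigs s)"
  note g = ginvD[OF assms(1)]
  have pi: "procinv n t F (sigs s) i (loc s i)" using g(5) assms(2,3) by blast
  have "Good n F (sigs s) (auxv (loc s i))" using pi unfolding procinv_def by blast
  then have gps: "Good n F ?SG ps"
    using assms(8) Good_sub Good_mono by (meson subset_insertI)
  have gm: "Good n F ?SG (insert (AUX i r est) ps)"
    using gps assms(2,3,11) unfolding Good_def wf_signed_def by auto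
  have G1: "pkt_ok n F (sigs ?s) pk" if "pk \<in> net ?s" for pk
  proof -
    from that consider "pk \<in> net s" | d where "pk = (Suc k, i, d, (AUX i r est, ps))" by auto
    then show "pkt_ok n F (sigs ?s) pk"
    proof cases
      case 1 then have "pkt_ok n F (sigs s) pk" using g(1) by blast
      then show ?thesis using pkt_ok_mono by (metis send_bcast_simps(3) subset_insertI upd_loc_simps(3))
    next
      case 2 then show ?thesis using gm unfolding pkt_ok_def by simp
    qed
  qed
  have G2: "signer m \<notin> F \<and> wf_signed n m" if "m \<in> sigs ?s" for m
  proof -
    have "m = AUX i r est \<or> m \<in> sigs s" using that by simp
    then show ?thesis using g(2)[of m] assms(2,3,11) unfolding wf_signed_def by auto
  qed
  have G3: "sig_ok n t F ?s j \<rho> x" if "AUX j \<rho> x \<in> sigs ?s" for j \<rho> x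
  proof (cases "AUX j \<rho> x = AUX i r est")
    case True
    then have e: "j = i" "\<rho> = r" "x = est" by auto
    have n1: "\<forall>d<n. d \<notin> F \<longrightarrow> (Suc k, i, d, (AUX i r est, ps)) \<in> net ?s \<or> insert (AUX i r est) (needed r est ps) \<subseteq> auxv (loc ?s d)"
        by simp
    have r1: "r \<le> rd (loc ?s i)" using assms(6) by simp
    have g1: "Good n F (sigs ?s) ps" using gps by simp
    show ?thesis unfolding sig_ok_def e
    proof (intro conjI exI[of _ "Suc k"] exI[of _ ps])
    qed (rule r1 g1 n1 assms(9) assms(10))+
  next
    case False
    then have "AUX j \<rho> x \<in> sigs s" using that by auto
    then have so: "sig_ok n t F s j \<rho> x" using g(3) by blast
    show ?thesis
    proof (rule sig_ok_mono[OF so])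
      show "rd (loc s j) \<le> rd (loc ?s j)" using assms(5) by (cases "j = i") simp_all
      show "sigs s \<subseteq> sigs ?s" by auto
      show "net s \<subseteq> net ?s" by auto
      show "auxv (loc s d) \<subseteq> auxv (loc ?s d)" for d using assms(4) by (cases "d = i") simp_all
    qed
  qed
  have G4: "x = y" if "AUX j \<rho> x \<in> sigs ?s" "AUX j \<rho> y \<in> sigs ?s" for j \<rho> x y
  proof -
    have "AUX j \<rho> x = AUX i r est \<or> AUX j \<rho> x \<in> sigs s" "AUX j \<rho> y = AUX i r est \<or> AUX j \<rho> y \<in> sigs s"
      using that by simp_all
    then show ?thesis using g(4)[of j \<rho> x y] assms(7) by auto
  qed
  have G5: "procinv n t F (sigs ?s) j (loc ?s j)" if "j < n" "j \<notin> F" for j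
  proof (cases "j = i")
    case True then show ?thesis using assms(12) by simp
  next
    case False
    have p: "procinv n t F (sigs s) j (loc s j)" using g(5) that by blast
    have e: "loc ?s j = loc s j" using False by simp
    have "procinv n t F ?SG j (loc s j)"
      by (rule procinv_mono[OF p]) (use False in auto)
    then show ?thesis using e by simp
  qed
  show ?thesis unfolding ginv_def using G1 G2 G3 G4 G5 by blast
qed

lemma receive_simps:
  "rd (receive n t pk l) = rd l" "pc (receive n t pk l) = pc l" "decided (receive n t pk l) = decided l"
  "auxv (receive n t (tg, src, d, m, ps) l) = (if is_valid n t (rnd m) (vl m) ps then auxv l \<union> {m} \<union> needed (rnd m) (vl m) ps else auxv l)"
  unfolding receive_def by (cases pk; auto simp: Let_def)+

lemma receive_tmr:
  "tmr l j \<noteq> Idle \<Longrightarrow> tmr (receive n t pk l) j \<noteq> Idle"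
  "tmr l j = Expired \<Longrightarrow> tmr (receive n t pk l) j = Expired"
  unfolding receive_def by (cases pk; auto simp: Let_def)+

lemma receive_auxv_mono: "auxv l \<subseteq> auxv (receive n t pk l)"
  by (cases pk) (auto simp: receive_simps)

lemma procinv_recv:
  assumes "procinv n t F SG i l" "Good n F SG (insert m ps)"
  shows "procinv n t F SG i (receive n t (tg, src, d, m, ps) l)"
proof -
  let ?l = "receive n t (tg, src, d, m, ps) l"
  have sub: "auxv ?l \<subseteq> auxv l \<union> insert m ps" using needed_sub by (auto simp: receive_simps)
  have g: "Good n F SG (auxv ?l)" using assms sub unfolding procinv_def Good_def by blast
  have j: "\<forall>x\<in>auxv ?l. justified n t F SG x"
  proof
    fix x assume x: "x \<in> auxv ?l"
    show "justified n t F SG x"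
    proof (cases "x \<in> auxv l")
      case True then show ?thesis using assms(1) unfolding procinv_def by blast
    next
      case False
      then have v: "is_valid n t (rnd m) (vl m) ps" and xin: "x \<in> insert m (needed (rnd m) (vl m) ps)"
        using x by (auto simp: receive_simps split: if_splits)
      have "m = AUX (signer m) (rnd m) (vl m)" by (cases m) auto
      then have "x \<in> insert (AUX (signer m) (rnd m) (vl m)) (needed (rnd m) (vl m) ps)" using xin by simp
      moreover have "Good n F SG ps" using assms(2) Good_sub by blast
      ultimately show ?thesis unfolding justified_def using v by blast
    qed
  qed
  have m1: "card (rsigners (auxv l) r) \<le> card (rsigners (auxv ?l) r)" for r
    by (rule card_rsigners_mono[OF g receive_auxv_mono])
  have m2: "card (signers (auxv l) r b) \<le> card (signers (auxv ?l) r b)" for r b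
    by (rule card_signers_mono[OF g receive_auxv_mono])
  have t1: "tmr l j \<noteq> Idle \<Longrightarrow> tmr ?l j \<noteq> Idle" for j by (rule receive_tmr(1))
  have p: "procinv n t F SG i l" by (rule assms(1))
  show ?thesis
    unfolding procinv_def receive_simps(1,2,3)
  proof (intro conjI allI impI)
  qed (use p g j m1 m2 t1 in \<open>auto simp: procinv_def intro: le_trans\<close>)
qed

lemma inv_deliver:
  assumes "ginv n t F s" "pk \<in> net s" "pdst pk \<notin> F"
  shows "ginv n t F (s\<lparr>loc := (loc s)(pdst pk := receive n t pk (loc s (pdst pk))), net := net s - {pk}\<rparr>)"
proof -
  obtain tg src d m ps where pk: "pk = (tg, src, d, m, ps)" by (cases pk)
  have dd: "pdst pk = d" unfolding pk pdst_def by simp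
  let ?s = "s\<lparr>loc := (loc s)(pdst pk := receive n t pk (loc s (pdst pk))), net := net s - {pk}\<rparr>"
  note g = ginvD[OF assms(1)]
  have gm: "Good n F (sigs s) (insert m ps)" using g(1)[OF assms(2)] unfolding pk pkt_ok_def by simp
  have sg: "sigs ?s = sigs s" by simp
  have amono: "auxv (loc s d') \<subseteq> auxv (loc ?s d')" for d'
    by (cases "d' = pdst pk") (simp_all add: receive_auxv_mono)
  have rdeq: "rd (loc ?s j) = rd (loc s j)" for j
    by (cases "j = pdst pk") (simp_all add: receive_simps)
  have G1: "pkt_ok n F (sigs ?s) p" if "p \<in> net ?s" for p
    using that g(1) by simp
  have G3: "sig_ok n t F ?s j \<rho> x" if "AUX j \<rho> x \<in> sigs ?s" for j \<rho> x
  proof -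
    have "sig_ok n t F s j \<rho> x" using g(3) that by simp
    then obtain tg' ps' where h1: "finite ps'" "is_valid n t \<rho> x ps'" "Good n F (sigs s) ps'"
      and h2: "\<forall>d<n. d \<notin> F \<longrightarrow> (tg', j, d, (AUX j \<rho> x, ps')) \<in> net s \<or> insert (AUX j \<rho> x) (needed \<rho> x ps') \<subseteq> auxv (loc s d)"
      and h3: "\<rho> \<le> rd (loc s j)"
      unfolding sig_ok_def by blast
    have h4: "(tg', j, d', (AUX j \<rho> x, ps')) \<in> net ?s \<or> insert (AUX j \<rho> x) (needed \<rho> x ps') \<subseteq> auxv (loc ?s d')"
      if d': "d' < n" "d' \<notin> F" for d'
    proof -
      from h2 d' consider "(tg', j, d', (AUX j \<rho> x, ps')) \<in> net s" | "insert (AUX j \<rho> x) (needed \<rho> x ps') \<subseteq> auxv (loc s d')"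
        by blast
      then show ?thesis
      proof cases
        case 1
        show ?thesis
        proof (cases "(tg', j, d', (AUX j \<rho> x, ps')) = pk")
          case True
          then have e: "d' = d" "m = AUX j \<rho> x" "ps = ps'" unfolding pk by auto
          have "auxv (loc ?s d') = auxv (receive n t pk (loc s d))" using dd e by simp
          also have "\<dots> = auxv (loc s d) \<union> {m} \<union> needed (rnd m) (vl m) ps"
            unfolding pk receive_simps using e h1(2) by simp
          finally show ?thesis using e by auto
        next
          case False then show ?thesis using 1 by simp
        qed
      next
        case 2 then show ?thesis using amono[of d'] by blast
      qed
    qed
    show ?thesis unfolding sig_ok_def
    proof (intro conjI exI[of _ tg'] exI[of _ ps'] allI impI)
      show "\<rho> \<le> rd (loc ?s j)" using h3 rdeq by simp
      show "Good n F (sigs ?s) ps'" using h1 by simp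
    qed (use h1 h4 in auto)
  qed
  have G5: "procinv n t F (sigs ?s) i (loc ?s i)" if "i < n" "i \<notin> F" for i
  proof (cases "i = pdst pk")
    case True
    have "procinv n t F (sigs s) i (receive n t (tg, src, d, m, ps) (loc s i))"
      by (rule procinv_recv[OF g(5)[OF that] gm])
    then show ?thesis using True pk by simp
  next
    case False then show ?thesis using g(5)[OF that] by simp
  qed
  have G2: "\<forall>m\<in>sigs ?s. signer m \<notin> F \<and> wf_signed n m" using g(2) by simp
  have G4: "\<forall>j \<rho> x y. AUX j \<rho> x \<in> sigs ?s \<longrightarrow> AUX j \<rho> y \<in> sigs ?s \<longrightarrow> x = y" using g(4) by simp
  show ?thesis unfolding ginv_def using G1 G2 G3 G4 G5 by blast
qed

lemma inv_byz:
  assumes "ginv n t F s" "Good n F (sigs s) (insert m ps)"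
  shows "ginv n t F (s\<lparr>net := insert (tg, j, d, (m, ps)) (net s)\<rparr>)"
proof -
  let ?s = "s\<lparr>net := insert (tg, j, d, (m, ps)) (net s)\<rparr>"
  note g = ginvD[OF assms(1)]
  have G1: "pkt_ok n F (sigs ?s) p" if "p \<in> net ?s" for p
    using that g(1) assms(2) by (auto simp: pkt_ok_def)
  have G3: "sig_ok n t F ?s j \<rho> x" if "AUX j \<rho> x \<in> sigs ?s" for j \<rho> x
    by (rule sig_ok_mono[OF g(3)]) (use that in auto)
  show ?thesis unfolding ginv_def using G1 G3 g(2) g(4) g(5) by simp
qed

lemma inv_expire:
  assumes "ginv n t F s" "i < n" "i \<notin> F"
  shows "ginv n t F (upd_loc s i ((loc s i)\<lparr>tmr := (tmr (loc s i))(j := Expired)\<rparr>))"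
proof (rule inv_upd[OF assms])
  have "procinv n t F (sigs s) i (loc s i)" using ginvD(5)[OF assms] .
  then show "procinv n t F (sigs s) i ((loc s i)\<lparr>tmr := (tmr (loc s i))(j := Expired)\<rparr>)"
    unfolding procinv_def by auto
qed auto



lemma start_timer_same[simp]: "start_timer j tm j \<noteq> Idle"
  unfolding start_timer_def by auto

lemma start_timer_other[simp]: "j' \<noteq> j \<Longrightarrow> start_timer j tm j' = tm j'"
  unfolding start_timer_def by auto

lemma start_timer_Expired: "tm j' = Expired \<Longrightarrow> start_timer j tm j' = Expired"
  unfolding start_timer_def by auto

lemma start_timer_nIdle: "tm j' \<noteq> Idle \<Longrightarrow> start_timer j tm j' \<noteq> Idle"
  unfolding start_timer_def by auto

lemma local_step_cases:
  assumes "local_step n t k i s s'"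
  obtains
    (S1) est ps where "pc (loc s i) = PStart" "i = Suc (rd (loc s i)) mod n"
      "bcast_ok n t (Suc (rd (loc s i))) (loc s i) est ps"
      "s' = send_bcast n k i (Suc (rd (loc s i))) est ps (upd_loc s i ((loc s i)\<lparr>rd := Suc (rd (loc s i)), tmr := start_timer (2 * Suc (rd (loc s i))) (tmr (loc s i)), pc := PWait1\<rparr>))"
  | (S2) "pc (loc s i) = PStart" "i \<noteq> Suc (rd (loc s i)) mod n"
      "s' = upd_loc s i ((loc s i)\<lparr>rd := Suc (rd (loc s i)), tmr := start_timer (2 * Suc (rd (loc s i))) (tmr (loc s i)), pc := PWait1\<rparr>)"
  | (W1a) est ps where "pc (loc s i) = PWait1" "tmr (loc s i) (2 * rd (loc s i)) = Expired" "i \<noteq> rd (loc s i) mod n"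
      "bcast_ok n t (rd (loc s i)) (loc s i) est ps"
      "s' = send_bcast n k i (rd (loc s i)) est ps (upd_loc s i ((loc s i)\<lparr>pc := PWait2\<rparr>))"
  | (W1b) "pc (loc s i) = PWait1" "tmr (loc s i) (2 * rd (loc s i)) = Expired" "i = rd (loc s i) mod n"
      "s' = upd_loc s i ((loc s i)\<lparr>pc := PWait2\<rparr>)"
  | (W2) "pc (loc s i) = PWait2" "n - t \<le> card (rsigners (auxv (loc s i)) (rd (loc s i)))"
      "s' = upd_loc s i ((loc s i)\<lparr>tmr := start_timer (2 * rd (loc s i) + 1) (tmr (loc s i)), pc := PWait3\<rparr>)"
  | (W3) "pc (loc s i) = PWait3" "tmr (loc s i) (2 * rd (loc s i) + 1) = Expired"
      "s' = upd_loc s i ((loc s i)\<lparr>decided := (if n - t \<le> card (signers (auxv (loc s i)) (rd (loc s i)) (rd (loc s i) mod 2)) \<and> decided (loc s i) = None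
                                          then Some (rd (loc s i)) else decided (loc s i)), pc := PStart\<rparr>)"
proof -
  have H: "(pc (loc s i) = PStart \<and>
        (if i = Suc (rd (loc s i)) mod n
         then (\<exists>est ps. bcast_ok n t (Suc (rd (loc s i))) (loc s i) est ps \<and> s' = send_bcast n k i (Suc (rd (loc s i))) est ps (upd_loc s i ((loc s i)\<lparr>rd := Suc (rd (loc s i)), tmr := start_timer (2 * Suc (rd (loc s i))) (tmr (loc s i)), pc := PWait1\<rparr>)))
         else s' = upd_loc s i ((loc s i)\<lparr>rd := Suc (rd (loc s i)), tmr := start_timer (2 * Suc (rd (loc s i))) (tmr (loc s i)), pc := PWait1\<rparr>)))
   \<or> (pc (loc s i) = PWait1 \<and> tmr (loc s i) (2 * rd (loc s i)) = Expired \<and>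
         (if i \<noteq> rd (loc s i) mod n
         then (\<exists>est ps. bcast_ok n t (rd (loc s i)) (loc s i) est ps \<and> s' = send_bcast n k i (rd (loc s i)) est ps (upd_loc s i ((loc s i)\<lparr>pc := PWait2\<rparr>)))
         else s' = upd_loc s i ((loc s i)\<lparr>pc := PWait2\<rparr>)))
   \<or> (pc (loc s i) = PWait2 \<and> n - t \<le> card (rsigners (auxv (loc s i)) (rd (loc s i))) \<and>
        s' = upd_loc s i ((loc s i)\<lparr>tmr := start_timer (2 * rd (loc s i) + 1) (tmr (loc s i)), pc := PWait3\<rparr>))
   \<or> (pc (loc s i) = PWait3 \<and> tmr (loc s i) (2 * rd (loc s i) + 1) = Expired \<and>
        s' = upd_loc s i ((loc s i)\<lparr>decided := (if n - t \<le> card (signers (auxv (loc s i)) (rd (loc s i)) (rd (loc s i) mod 2)) \<and> decided (loc s i) = None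
                                          then Some (rd (loc s i)) else decided (loc s i)), pc := PStart\<rparr>))"
    using assms unfolding local_step_def Let_def by simp
  then show thesis
  proof (elim disjE conjE)
    assume a: "pc (loc s i) = PStart" and b: "if i = Suc (rd (loc s i)) mod n
         then (\<exists>est ps. bcast_ok n t (Suc (rd (loc s i))) (loc s i) est ps \<and> s' = send_bcast n k i (Suc (rd (loc s i))) est ps (upd_loc s i ((loc s i)\<lparr>rd := Suc (rd (loc s i)), tmr := start_timer (2 * Suc (rd (loc s i))) (tmr (loc s i)), pc := PWait1\<rparr>)))
         else s' = upd_loc s i ((loc s i)\<lparr>rd := Suc (rd (loc s i)), tmr := start_timer (2 * Suc (rd (loc s i))) (tmr (loc s i)), pc := PWait1\<rparr>)"
    show thesis
    proof (cases "i = Suc (rd (loc s i)) mod n")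
      case True
      with b obtain est ps where "bcast_ok n t (Suc (rd (loc s i))) (loc s i) est ps" "s' = send_bcast n k i (Suc (rd (loc s i))) est ps (upd_loc s i ((loc s i)\<lparr>rd := Suc (rd (loc s i)), tmr := start_timer (2 * Suc (rd (loc s i))) (tmr (loc s i)), pc := PWait1\<rparr>))"
        by auto
      then show thesis using S1 a True by blast
    next
      case False
      with b show thesis using S2 a by simp
    qed
  next
    assume a: "pc (loc s i) = PWait1" "tmr (loc s i) (2 * rd (loc s i)) = Expired" and b: "if i \<noteq> rd (loc s i) mod n
         then (\<exists>est ps. bcast_ok n t (rd (loc s i)) (loc s i) est ps \<and> s' = send_bcast n k i (rd (loc s i)) est ps (upd_loc s i ((loc s i)\<lparr>pc := PWait2\<rparr>)))
         else s' = upd_loc s i ((loc s i)\<lparr>pc := PWait2\<rparr>)"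
    show thesis
    proof (cases "i = rd (loc s i) mod n")
      case False
      with b obtain est ps where "bcast_ok n t (rd (loc s i)) (loc s i) est ps" "s' = send_bcast n k i (rd (loc s i)) est ps (upd_loc s i ((loc s i)\<lparr>pc := PWait2\<rparr>))"
        by auto
      then show thesis using W1a a False by blast
    next
      case True
      with b show thesis using W1b a by simp
    qed
  next
    assume "pc (loc s i) = PWait2" "n - t \<le> card (rsigners (auxv (loc s i)) (rd (loc s i)))"
        "s' = upd_loc s i ((loc s i)\<lparr>tmr := start_timer (2 * rd (loc s i) + 1) (tmr (loc s i)), pc := PWait3\<rparr>)"
    then show thesis using W2 by blast
  next
    assume "pc (loc s i) = PWait3" "tmr (loc s i) (2 * rd (loc s i) + 1) = Expired"
      "s' = upd_loc s i ((loc s i)\<lparr>decided := (if n - t \<le> card (signers (auxv (loc s i)) (rd (loc s i)) (rd (loc s i) mod 2)) \<and> decided (loc s i) = None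
                                          then Some (rd (loc s i)) else decided (loc s i)), pc := PStart\<rparr>)"
    then show thesis using W3 by blast
  qed
qed

lemma bcast_okD:
  assumes "bcast_ok n t r l est ps"
  shows "ps \<subseteq> auxv l" "finite ps" "is_valid n t r est ps" "est \<le> 1"
proof -
  show "ps \<subseteq> auxv l" "finite ps" "is_valid n t r est ps" using assms unfolding bcast_ok_def Let_def by auto
  show "est \<le> 1" using assms unfolding bcast_ok_def Let_def valid_vals_def
    by (auto split: if_splits)
qed

lemma pi_start:
  assumes "procinv n t F SG i l" "pc l = PStart" "SG \<subseteq> SG'"
    "i \<noteq> Suc (rd l) mod n \<Longrightarrow> \<forall>x. AUX i (Suc (rd l)) x \<notin> SG'"
    "i = Suc (rd l) mod n \<Longrightarrow> \<exists>x. AUX i (Suc (rd l)) x \<in> SG'"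
  shows "procinv n t F SG' i (l\<lparr>rd := Suc (rd l), tmr := start_timer (2 * Suc (rd l)) (tmr l), pc := PWait1\<rparr>)"
proof -
  have a: "Good n F SG (auxv l)" "\<forall>m\<in>auxv l. justified n t F SG m"
    "\<forall>\<rho>. decided l = Some \<rho> \<longrightarrow> 1 \<le> \<rho> \<and> \<rho> \<le> rd l \<and> n - t \<le> card (signers (auxv l) \<rho> (\<rho> mod 2))"
    "\<forall>\<rho><rd l. \<exists>x. AUX i \<rho> x \<in> SG" "\<exists>x. AUX i (rd l) x \<in> SG"
    using assms(1,2) unfolding procinv_def by auto
  have b: "\<forall>\<rho><Suc (rd l). \<exists>x. AUX i \<rho> x \<in> SG'"
    using a(4,5) assms(3) by (metis less_Suc_eq subsetD)
  have c1: "Good n F SG' (auxv l)" using Good_mono[OF a(1) assms(3)] .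
  have c2: "\<forall>m\<in>auxv l. justified n t F SG' m" using a(2) justified_mono assms(3) by blast
  have c6: "\<forall>\<rho>. decided l = Some \<rho> \<longrightarrow> 1 \<le> \<rho> \<and> \<rho> \<le> Suc (rd l) \<and> n - t \<le> card (signers (auxv l) \<rho> (\<rho> mod 2))"
    using a(3) le_SucI by blast
  show ?thesis unfolding procinv_def
    using c1 c2 c6 b assms(4,5) by simp
qed

lemma pi_w1:
  assumes "procinv n t F SG i l" "pc l = PWait1" "SG \<subseteq> SG'" "\<exists>x. AUX i (rd l) x \<in> SG'"
  shows "procinv n t F SG' i (l\<lparr>pc := PWait2\<rparr>)"
proof -
  have a: "Good n F SG (auxv l)" "\<forall>m\<in>auxv l. justified n t F SG m"
    "\<forall>\<rho>. decided l = Some \<rho> \<longrightarrow> 1 \<le> \<rho> \<and> \<rho> \<le> rd l \<and> n - t \<le> card (signers (auxv l) \<rho> (\<rho> mod 2))"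
    "\<forall>\<rho><rd l. \<exists>x. AUX i \<rho> x \<in> SG" "1 \<le> rd l \<and> tmr l (2 * rd l) \<noteq> Idle"
    using assms(1,2) unfolding procinv_def by auto
  have c1: "Good n F SG' (auxv l)" using Good_mono[OF a(1) assms(3)] .
  have c2: "\<forall>m\<in>auxv l. justified n t F SG' m" using a(2) justified_mono assms(3) by blast
  have c7: "\<forall>\<rho><rd l. \<exists>x. AUX i \<rho> x \<in> SG'" using a(4) assms(3) by blast
  show ?thesis unfolding procinv_def
    using c1 c2 c7 a(3,5) assms(4) by simp
qed

lemma pi_w2:
  assumes "procinv n t F SG i l" "pc l = PWait2" "n - t \<le> card (rsigners (auxv l) (rd l))"
  shows "procinv n t F SG i (l\<lparr>tmr := start_timer (2 * rd l + 1) (tmr l), pc := PWait3\<rparr>)"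
  using assms unfolding procinv_def by auto

lemma pi_w3:
  assumes "procinv n t F SG i l" "pc l = PWait3"
  shows "procinv n t F SG i (l\<lparr>decided := (if n - t \<le> card (signers (auxv l) (rd l) (rd l mod 2)) \<and> decided l = None
                                          then Some (rd l) else decided l), pc := PStart\<rparr>)"
  using assms unfolding procinv_def by auto

lemma nosig_future:
  assumes "ginv n t F s" "rd (loc s i) < r"
  shows "AUX i r x \<notin> sigs s"
proof
  assume "AUX i r x \<in> sigs s"
  then have "sig_ok n t F s i r x" using ginvD(3)[OF assms(1)] by blast
  then show False using assms(2) unfolding sig_ok_def by auto
qed

lemma inv_local:
  assumes "ginv n t F s" "i < n" "i \<notin> F" "local_step n t k i s s'"
  shows "ginv n t F s'"
  using assms(4)
proof (cases rule: local_step_cases)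
  case (S1 est ps)
  note bo = bcast_okD[OF S1(3)]
  have pi: "procinv n t F (sigs s) i (loc s i)" using ginvD(5)[OF assms(1-3)] .
  have nos: "\<forall>x. AUX i (Suc (rd (loc s i))) x \<notin> sigs s" using nosig_future[OF assms(1)] by simp
  show ?thesis unfolding S1(4)
  proof (rule inv_send[OF assms(1-3)])
    show "procinv n t F (insert (AUX i (Suc (rd (loc s i))) est) (sigs s)) i
     ((loc s i)\<lparr>rd := Suc (rd (loc s i)), tmr := start_timer (2 * Suc (rd (loc s i))) (tmr (loc s i)), pc := PWait1\<rparr>)"
      by (rule pi_start[OF pi S1(1)]) (use S1(2) in auto)
  qed (use nos bo in auto)
next
  case S2
  have pi: "procinv n t F (sigs s) i (loc s i)" using ginvD(5)[OF assms(1-3)] .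
  have nos: "\<forall>x. AUX i (Suc (rd (loc s i))) x \<notin> sigs s" using nosig_future[OF assms(1)] by simp
  show ?thesis unfolding S2(3)
  proof (rule inv_upd[OF assms(1-3)])
    show "procinv n t F (sigs s) i
     ((loc s i)\<lparr>rd := Suc (rd (loc s i)), tmr := start_timer (2 * Suc (rd (loc s i))) (tmr (loc s i)), pc := PWait1\<rparr>)"
      by (rule pi_start[OF pi S2(1)]) (use S2(2) nos in auto)
  qed auto
next
  case (W1a est ps)
  note bo = bcast_okD[OF W1a(4)]
  have pi: "procinv n t F (sigs s) i (loc s i)" using ginvD(5)[OF assms(1-3)] .
  have nos: "\<forall>x. AUX i (rd (loc s i)) x \<notin> sigs s" using pi W1a(1,3) unfolding procinv_def by blast
  show ?thesis unfolding W1a(5)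
  proof (rule inv_send[OF assms(1-3)])
    show "procinv n t F (insert (AUX i (rd (loc s i)) est) (sigs s)) i ((loc s i)\<lparr>pc := PWait2\<rparr>)"
      by (rule pi_w1[OF pi W1a(1)]) auto
  qed (use nos bo in auto)
next
  case W1b
  have pi: "procinv n t F (sigs s) i (loc s i)" using ginvD(5)[OF assms(1-3)] .
  have ex: "\<exists>x. AUX i (rd (loc s i)) x \<in> sigs s" using pi W1b(3) unfolding procinv_def by blast
  show ?thesis unfolding W1b(4)
  proof (rule inv_upd[OF assms(1-3)])
    show "procinv n t F (sigs s) i ((loc s i)\<lparr>pc := PWait2\<rparr>)"
      by (rule pi_w1[OF pi W1b(1)]) (use ex in auto)
  qed auto
next
  case W2
  have pi: "procinv n t F (sigs s) i (loc s i)" using ginvD(5)[OF assms(1-3)] .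
  show ?thesis unfolding W2(3)
    by (rule inv_upd[OF assms(1-3)], simp, simp, rule pi_w2[OF pi W2(1,2)])
next
  case W3
  have pi: "procinv n t F (sigs s) i (loc s i)" using ginvD(5)[OF assms(1-3)] .
  show ?thesis unfolding W3(3)
    by (rule inv_upd[OF assms(1-3)], simp, simp, rule pi_w3[OF pi W3(1)])
qed

lemma inv_step:
  assumes "ginv n t F s" "step n t F k a s s'"
  shows "ginv n t F s'"
proof (cases a)
  case (Local i)
  then show ?thesis using assms inv_local unfolding step_def by auto
next
  case (Deliver pk)
  show ?thesis
  proof (cases "pdst pk \<in> F")
    case True
    then have "pk \<in> net s" "s' = s\<lparr>net := net s - {pk}\<rparr>" using assms(2) Deliver unfolding step_def by auto
    moreover have "ginv n t F (s\<lparr>net := net s - {pk}\<rparr>)"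
    proof -
      note g = ginvD[OF assms(1)]
      have G3: "sig_ok n t F (s\<lparr>net := net s - {pk}\<rparr>) j \<rho> x" if "AUX j \<rho> x \<in> sigs s" for j \<rho> x
      proof -
        have "sig_ok n t F s j \<rho> x" using g(3) that by blast
        then obtain tg' ps' where h1: "finite ps'" "is_valid n t \<rho> x ps'" "Good n F (sigs s) ps'"
          and h2: "\<forall>d<n. d \<notin> F \<longrightarrow> (tg', j, d, (AUX j \<rho> x, ps')) \<in> net s \<or> insert (AUX j \<rho> x) (needed \<rho> x ps') \<subseteq> auxv (loc s d)"
          and h3: "\<rho> \<le> rd (loc s j)"
          unfolding sig_ok_def by blast
        have h4: "\<forall>d<n. d \<notin> F \<longrightarrow> (tg', j, d, (AUX j \<rho> x, ps')) \<in> net s - {pk} \<or> insert (AUX j \<rho> x) (needed \<rho> x ps') \<subseteq> auxv (loc s d)"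
          using h2 True unfolding pdst_def by fastforce
        show ?thesis unfolding sig_ok_def using h1 h3 h4 by auto
      qed
      show ?thesis unfolding ginv_def using g G3 by auto
    qed
    ultimately show ?thesis by simp
  next
    case False
    then have "pk \<in> net s" "s' = s\<lparr>loc := (loc s)(pdst pk := receive n t pk (loc s (pdst pk))), net := net s - {pk}\<rparr>"
      using assms(2) Deliver unfolding step_def by auto
    then show ?thesis using inv_deliver[OF assms(1) _ False] by simp
  qed
next
  case (Expire i j)
  then show ?thesis using assms inv_expire unfolding step_def by auto
next
  case (ByzSend j d m ps)
  then have "s' = s\<lparr>net := insert (Suc k, j, d, (m, ps)) (net s)\<rparr>" "Good n F (sigs s) (insert m ps)"
    using assms(2) unfolding step_def Good_def by auto
  then show ?thesis using inv_byz[OF assms(1)] by simp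
next
  case Skip
  then show ?thesis using assms unfolding step_def by auto
qed

lemma inv_init:
  assumes "\<forall>i<n. i \<notin> F \<longrightarrow> v i \<le> 1"
  shows "ginv n t F (init n F v)"
proof -
  let ?s = "init n F v"
  have G1: "pkt_ok n F (sigs ?s) pk" if "pk \<in> net ?s" for pk
    using that assms unfolding init_def pkt_ok_def Good_def wf_signed_def by auto
  have G3: "sig_ok n t F ?s j \<rho> x" if "AUX j \<rho> x \<in> sigs ?s" for j \<rho> x
  proof -
    have e: "\<rho> = 0" "x = v j" "j < n" "j \<notin> F" using that unfolding init_def by auto
    show ?thesis unfolding sig_ok_def
      apply (intro conjI exI[of _ 0] exI[of _ "{}"])
      using e unfolding init_def Good_def is_valid_def needed_def by auto
  qed
  have G5: "procinv n t F (sigs ?s) i (loc ?s i)" if "i < n" "i \<notin> F" for i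
    using that unfolding procinv_def init_def Good_def by auto
  show ?thesis unfolding ginv_def using G1 G3 G5 assms unfolding init_def wf_signed_def by auto
qed



definition pos :: "lstate \<Rightarrow> nat" where
  "pos l = 4 * rd l + (case pc l of PStart \<Rightarrow> 4 | PWait1 \<Rightarrow> 1 | PWait2 \<Rightarrow> 2 | PWait3 \<Rightarrow> 3)"

lemma local_step_effect:
  assumes "local_step n t k i s s'"
  shows "pos (loc s i) < pos (loc s' i)" "auxv (loc s' i) = auxv (loc s i)" "j \<noteq> i \<Longrightarrow> loc s' j = loc s j"
    "sigs s \<subseteq> sigs s'" "tmr (loc s i) j' = Expired \<Longrightarrow> tmr (loc s' i) j' = Expired" "net s \<subseteq> net s'"
  using assms
  by (cases rule: local_step_cases; auto simp: pos_def start_timer_def)+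

lemma step_cases:
  assumes "step n t F k a s s'"
  obtains (L) i' where "a = Local i'" "i' < n" "i' \<notin> F" "local_step n t k i' s s'"
  | (D1) pk where "a = Deliver pk" "pk \<in> net s" "pdst pk \<notin> F"
      "s' = s\<lparr>loc := (loc s)(pdst pk := receive n t pk (loc s (pdst pk))), net := net s - {pk}\<rparr>"
  | (D2) pk where "a = Deliver pk" "pk \<in> net s" "pdst pk \<in> F" "s' = s\<lparr>net := net s - {pk}\<rparr>"
  | (E) i' j' where "a = Expire i' j'" "s' = upd_loc s i' ((loc s i')\<lparr>tmr := (tmr (loc s i'))(j' := Expired)\<rparr>)"
  | (B) j' d m ps where "a = ByzSend j' d m ps" "s' = s\<lparr>net := insert (Suc k, j', d, (m, ps)) (net s)\<rparr>"
  | (S) "a = Skip" "s' = s"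
  using assms unfolding step_def by (cases a) (auto split: if_splits)

lemma step_effect:
  assumes "step n t F k a s s'"
  shows "sigs s \<subseteq> sigs s'" "auxv (loc s i) \<subseteq> auxv (loc s' i)"
    "tmr (loc s i) j = Expired \<Longrightarrow> tmr (loc s' i) j = Expired"
    "a \<noteq> Local i \<Longrightarrow> rd (loc s' i) = rd (loc s i) \<and> pc (loc s' i) = pc (loc s i)"
    "a = Local i \<Longrightarrow> local_step n t k i s s'"
    "pk \<in> net s \<Longrightarrow> pk \<notin> net s' \<Longrightarrow> a = Deliver pk"
proof -
  show "sigs s \<subseteq> sigs s'"
    using assms by (cases rule: step_cases) (auto dest: local_step_effect(4))
  show "auxv (loc s i) \<subseteq> auxv (loc s' i)"
    using assms
  proof (cases rule: step_cases)
    case (L i')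
    then show ?thesis using local_step_effect(2,3)[OF L(4)] by (cases "i = i'") auto
  next
    case (D1 pk)
    then show ?thesis using receive_auxv_mono by (cases "i = pdst pk") auto
  qed auto
  show "tmr (loc s i) j = Expired \<Longrightarrow> tmr (loc s' i) j = Expired"
    using assms
  proof (cases rule: step_cases)
    case (L i')
    then show "tmr (loc s i) j = Expired \<Longrightarrow> tmr (loc s' i) j = Expired"
      using local_step_effect(3,5)[OF L(4)] by (cases "i = i'") auto
  next
    case (D1 pk)
    then show "tmr (loc s i) j = Expired \<Longrightarrow> tmr (loc s' i) j = Expired"
      using receive_tmr(2) by (cases "i = pdst pk") auto
  qed auto
  show "a \<noteq> Local i \<Longrightarrow> rd (loc s' i) = rd (loc s i) \<and> pc (loc s' i) = pc (loc s i)"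
    using assms
  proof (cases rule: step_cases)
    case (L i')
    then show "a \<noteq> Local i \<Longrightarrow> rd (loc s' i) = rd (loc s i) \<and> pc (loc s' i) = pc (loc s i)"
      using local_step_effect(3)[OF L(4), of i] by auto
  next
    case (D1 pk)
    then show "a \<noteq> Local i \<Longrightarrow> rd (loc s' i) = rd (loc s i) \<and> pc (loc s' i) = pc (loc s i)"
      by (cases "i = pdst pk") (auto simp: receive_simps)
  qed auto
  show "a = Local i \<Longrightarrow> local_step n t k i s s'"
    using assms unfolding step_def by auto
  show "pk \<in> net s \<Longrightarrow> pk \<notin> net s' \<Longrightarrow> a = Deliver pk"
    using assms
  proof (cases rule: step_cases)
    case (L i')
    then show "pk \<in> net s \<Longrightarrow> pk \<notin> net s' \<Longrightarrow> a = Deliver pk"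
      using local_step_effect(6)[OF L(4)] by auto
  qed auto
qed

lemma bcast_exists:
  assumes "valid_vals n t r (auxv l) \<noteq> {}"
  shows "\<exists>est ps. bcast_ok n t r l est ps"
proof -
  let ?vals = "valid_vals n t r (auxv l)"
  let ?c = "r mod n"
  let ?bv = "(r + 1) mod 2"
  have vv: "\<And>w. w \<in> ?vals \<Longrightarrow> w \<le> 1 \<and> (\<exists>S'\<subseteq>auxv l. finite S' \<and> is_valid n t r w S')"
    unfolding valid_vals_def by blast
  show ?thesis
  proof (cases "\<exists>p\<in>?vals. (?c, AUX ?c r p) \<in> rcvd l")
    case True
    then obtain p where p: "p \<in> ?vals" "(?c, AUX ?c r p) \<in> rcvd l" by blast
    then obtain S' where "S' \<subseteq> auxv l" "finite S'" "is_valid n t r p S'" using vv by blast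
    then have "bcast_ok n t r l p S'" unfolding bcast_ok_def Let_def using p by (simp only: if_P[OF True]; (blast)?)
    then show ?thesis by blast
  next
    case False
    show ?thesis
    proof (cases "?bv \<in> ?vals")
      case True
      then obtain S' where "S' \<subseteq> auxv l" "finite S'" "is_valid n t r ?bv S'" using vv by blast
      then have "bcast_ok n t r l ?bv S'" unfolding bcast_ok_def Let_def using True by (simp only: if_not_P[OF False] if_P[OF True]; simp)
      then show ?thesis by blast
    next
      case F2: False
      obtain w where w: "w \<in> ?vals" using assms by blast
      then have "w = 1 - ?bv" using vv[OF w] F2 by (cases "w = ?bv") auto
      then obtain S' where "S' \<subseteq> auxv l" "finite S'" "is_valid n t r (1 - ?bv) S'" using vv w by blast
      then have "bcast_ok n t r l (1 - ?bv) S'" unfolding bcast_ok_def Let_def by (simp only: if_not_P[OF False] if_not_P[OF F2]; simp)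
      then show ?thesis by blast
    qed
  qed
qed

lemma enabled_start:
  assumes "pc (loc g i) = PStart"
    "i = Suc (rd (loc g i)) mod n \<Longrightarrow> valid_vals n t (Suc (rd (loc g i))) (auxv (loc g i)) \<noteq> {}"
  shows "\<exists>s'. local_step n t k i g s'"
proof (cases "i = Suc (rd (loc g i)) mod n")
  case True
  then obtain est ps where bo: "bcast_ok n t (Suc (rd (loc g i))) (loc g i) est ps" using assms(2) bcast_exists by blast
  have "local_step n t k i g (send_bcast n k i (Suc (rd (loc g i))) est ps (upd_loc g i ((loc g i)\<lparr>rd := Suc (rd (loc g i)), tmr := start_timer (2 * Suc (rd (loc g i))) (tmr (loc g i)), pc := PWait1\<rparr>)))"
    unfolding local_step_def Let_def
    apply (rule disjI1)
    apply (rule conjI, rule assms(1))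
    apply (simp only: if_P[OF True])
    using bo by blast
  then show ?thesis by blast
next
  case False
  have "local_step n t k i g (upd_loc g i ((loc g i)\<lparr>rd := Suc (rd (loc g i)), tmr := start_timer (2 * Suc (rd (loc g i))) (tmr (loc g i)), pc := PWait1\<rparr>))"
    unfolding local_step_def Let_def
    apply (rule disjI1)
    apply (rule conjI, rule assms(1))
    apply (simp only: if_not_P[OF False])
    done
  then show ?thesis by blast
qed

lemma enabled_w1:
  assumes "pc (loc g i) = PWait1" "tmr (loc g i) (2 * rd (loc g i)) = Expired"
    "i \<noteq> rd (loc g i) mod n \<Longrightarrow> valid_vals n t (rd (loc g i)) (auxv (loc g i)) \<noteq> {}"
  shows "\<exists>s'. local_step n t k i g s'"
proof (cases "i \<noteq> rd (loc g i) mod n")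
  case True
  then obtain est ps where bo: "bcast_ok n t (rd (loc g i)) (loc g i) est ps" using assms(3) bcast_exists by blast
  have "local_step n t k i g (send_bcast n k i (rd (loc g i)) est ps (upd_loc g i ((loc g i)\<lparr>pc := PWait2\<rparr>)))"
    unfolding local_step_def Let_def
    apply (rule disjI2, rule disjI1)
    apply (rule conjI, rule assms(1))
    apply (rule conjI, rule assms(2))
    apply (simp only: if_P[OF True])
    using bo by blast
  then show ?thesis by blast
next
  case False
  have "local_step n t k i g (upd_loc g i ((loc g i)\<lparr>pc := PWait2\<rparr>))"
    unfolding local_step_def Let_def
    apply (rule disjI2, rule disjI1)
    apply (rule conjI, rule assms(1))
    apply (rule conjI, rule assms(2))
    apply (simp only: if_not_P[OF False])
    done
  then show ?thesis by blast
qed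

lemma enabled_w2:
  assumes "pc (loc g i) = PWait2" "n - t \<le> card (rsigners (auxv (loc g i)) (rd (loc g i)))"
  shows "\<exists>s'. local_step n t k i g s'"
proof -
  have "local_step n t k i g (upd_loc g i ((loc g i)\<lparr>tmr := start_timer (2 * rd (loc g i) + 1) (tmr (loc g i)), pc := PWait3\<rparr>))"
    unfolding local_step_def Let_def
    apply (rule disjI2, rule disjI2, rule disjI1)
    using assms by blast
  then show ?thesis by blast
qed

lemma enabled_w3:
  assumes "pc (loc g i) = PWait3" "tmr (loc g i) (2 * rd (loc g i) + 1) = Expired"
  shows "\<exists>s'. local_step n t k i g s'"
proof -
  have "local_step n t k i g (upd_loc g i ((loc g i)\<lparr>decided := (if n - t \<le> card (signers (auxv (loc g i)) (rd (loc g i)) (rd (loc g i) mod 2)) \<and> decided (loc g i) = None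
                                          then Some (rd (loc g i)) else decided (loc g i)), pc := PStart\<rparr>))"
    unfolding local_step_def Let_def
    apply (rule disjI2, rule disjI2, rule disjI2)
    using assms by blast
  then show ?thesis by blast
qed

lemma valid_vals_mono: "S \<subseteq> S' \<Longrightarrow> valid_vals n t r S \<subseteq> valid_vals n t r S'"
  unfolding valid_vals_def by blast

lemma pos_cases:
  "pos l = 4 * \<rho> + 4 \<Longrightarrow> rd l = \<rho> \<and> pc l = PStart"
  "pos l = 4 * \<rho> + 5 \<Longrightarrow> rd l = Suc \<rho> \<and> pc l = PWait1"
  "pos l = 4 * \<rho> + 6 \<Longrightarrow> rd l = Suc \<rho> \<and> pc l = PWait2"
  "pos l = 4 * \<rho> + 7 \<Longrightarrow> rd l = Suc \<rho> \<and> pc l = PWait3"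
  "4 * \<rho> + 6 \<le> pos l \<Longrightarrow> Suc \<rho> < rd l \<or> (Suc \<rho> = rd l \<and> pc l \<noteq> PWait1)"
  unfolding pos_def by (cases "pc l"; simp; presburger)+

lemma eventually_all:
  fixes P :: "'a \<Rightarrow> nat \<Rightarrow> bool"
  assumes "finite J" "\<forall>j\<in>J. \<exists>k. P j k" "\<And>j k k'. P j k \<Longrightarrow> k \<le> k' \<Longrightarrow> P j k'"
  shows "\<exists>K. \<forall>j\<in>J. P j K"
  using assms(1,2)
proof (induction J rule: finite_induct)
  case empty then show ?case by simp
next
  case (insert x J)
  then obtain K where K: "\<forall>j\<in>J. P j K" by blast
  obtain k where k: "P x k" using insert.prems by blast
  have "P j (max K k)" if "j \<in> insert x J" for j
  proof (cases "j = x")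
    case True then show ?thesis using assms(3)[OF k, of "max K k"] by simp
  next
    case False then have "P j K" using K that by simp
    then show ?thesis using assms(3)[of j K "max K k"] by simp
  qed
  then show ?case by blast
qed

lemma crossing:
  fixes f :: "nat \<Rightarrow> nat"
  assumes "f 0 \<le> P" "P < f k"
  shows "\<exists>j<k. f j \<le> P \<and> P < f (Suc j)"
  using assms(2)
proof (induction k)
  case 0 then show ?case using assms(1) by simp
next
  case (Suc k)
  show ?case
  proof (cases "P < f k")
    case True
    then obtain j where "j < k" "f j \<le> P \<and> P < f (Suc j)" using Suc.IH by blast
    then show ?thesis by (intro exI[of _ j]) simp
  next
    case False then show ?thesis using Suc.prems by (intro exI[of _ k]) auto
  qed
qed



locale exec =
  fixes n t :: nat and F :: "nat set" and v :: "nat \<Rightarrow> nat" and s :: "nat \<Rightarrow> gstate" and a :: "nat \<Rightarrow> action"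
  assumes nt: "3 * t < n" and Fsub: "F \<subseteq> {..<n}" and cF: "card F \<le> t"
    and vb: "\<forall>i<n. i \<notin> F \<longrightarrow> v i \<le> 1" and fe: "fair_execution n t F v s a"
begin

lemma s0: "s 0 = init n F v" using fe unfolding fair_execution_def by blast
lemma stp: "step n t F k (a k) (s k) (s (Suc k))" using fe unfolding fair_execution_def by blast
lemma fair_net: "pk \<in> net (s k) \<Longrightarrow> pdst pk \<notin> F \<Longrightarrow> \<exists>k'\<ge>k. pk \<notin> net (s k')"
  using fe unfolding fair_execution_def by blast
lemma fair_tmr: "i < n \<Longrightarrow> i \<notin> F \<Longrightarrow> tmr (loc (s k) i) j = Running \<Longrightarrow> \<exists>k'\<ge>k. tmr (loc (s k') i) j = Expired"
  using fe unfolding fair_execution_def by blast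
lemma fair_loc: "i < n \<Longrightarrow> i \<notin> F \<Longrightarrow> local_step n t k i (s k) s' \<Longrightarrow> \<exists>k'\<ge>k. a k' = Local i"
  using fe unfolding fair_execution_def by blast

lemma INV: "ginv n t F (s k)"
proof (induction k)
  case 0 then show ?case using s0 inv_init vb by simp
next
  case (Suc k) then show ?case using inv_step stp by blast
qed

lemma sigs_mono: "k \<le> k' \<Longrightarrow> sigs (s k) \<subseteq> sigs (s k')"
proof (induction rule: dec_induct)
  case base then show ?case by simp
next
  case (step m) then show ?case using step_effect(1)[OF stp[of m]] by blast
qed

lemma auxv_mono: "k \<le> k' \<Longrightarrow> auxv (loc (s k) i) \<subseteq> auxv (loc (s k') i)"
proof (induction rule: dec_induct)
  case base then show ?case by simp
next
  case (step m) then show ?case using step_effect(2)[OF stp[of m]] by blast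
qed

lemma exp_mono: "k \<le> k' \<Longrightarrow> tmr (loc (s k) i) j = Expired \<Longrightarrow> tmr (loc (s k') i) j = Expired"
proof (induction rule: dec_induct)
  case base then show ?case by simp
next
  case (step m) then show ?case using step_effect(3)[OF stp[of m]] by blast
qed

lemma pos_step: "pos (loc (s k) i) \<le> pos (loc (s (Suc k)) i)"
proof (cases "a k = Local i")
  case True
  then show ?thesis using local_step_effect(1)[OF step_effect(5)[OF stp True]] by simp
next
  case False
  then show ?thesis using step_effect(4)[OF stp False] unfolding pos_def by simp
qed

lemma pos_mono: "k \<le> k' \<Longrightarrow> pos (loc (s k) i) \<le> pos (loc (s k') i)"
proof (induction rule: dec_induct)
  case base then show ?case by simp
next
  case (step m) then show ?case using pos_step[of m i] by simp
qed

lemma procinv_at: "i < n \<Longrightarrow> i \<notin> F \<Longrightarrow> procinv n t F (sigs (s k)) i (loc (s k) i)"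
  using ginvD(5)[OF INV] by blast

lemma sig_delivered:
  assumes "AUX j \<rho> x \<in> sigs (s k)" "d < n" "d \<notin> F"
  shows "\<exists>ps k'. is_valid n t \<rho> x ps \<and> finite ps \<and> insert (AUX j \<rho> x) (needed \<rho> x ps) \<subseteq> auxv (loc (s k') d)"
proof -
  have "sig_ok n t F (s k) j \<rho> x" using ginvD(3)[OF INV] assms(1) by blast
  then obtain tg ps where h1: "finite ps" "is_valid n t \<rho> x ps"
    and h2: "(tg, j, d, (AUX j \<rho> x, ps)) \<in> net (s k) \<or> insert (AUX j \<rho> x) (needed \<rho> x ps) \<subseteq> auxv (loc (s k) d)"
    unfolding sig_ok_def using assms(2,3) by blast
  let ?pk = "(tg, j, d, (AUX j \<rho> x, ps))"
  let ?C = "\<lambda>k. insert (AUX j \<rho> x) (needed \<rho> x ps) \<subseteq> auxv (loc (s k) d)"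
  have track: "?pk \<in> net (s k') \<or> ?C k'" if "k \<le> k'" for k'
    using that
  proof (induction rule: dec_induct)
    case base then show ?case using h2 by blast
  next
    case (step m)
    show ?case
    proof (cases "?C m")
      case True then show ?thesis using auxv_mono[of m "Suc m" d] by auto
    next
      case False
      then have inn: "?pk \<in> net (s m)" using step.IH by blast
      show ?thesis
      proof (cases "?pk \<in> net (s (Suc m))")
        case True then show ?thesis by blast
      next
        case False
        then have ad: "a m = Deliver ?pk" using step_effect(6)[OF stp inn] by blast
        have pd: "pdst ?pk = d" unfolding pdst_def by simp
        have "loc (s (Suc m)) d = receive n t ?pk (loc (s m) d)"
          using stp[of m] ad pd assms(3) unfolding step_def by auto
        then have "?C (Suc m)" using h1(2) by (auto simp: receive_simps)
        then show ?thesis by blast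
      qed
    qed
  qed
  show ?thesis
  proof (cases "?pk \<in> net (s k)")
    case True
    then obtain k' where "k' \<ge> k" "?pk \<notin> net (s k')" using fair_net[of ?pk k] assms(3) unfolding pdst_def by auto
    then have "?C k'" using track by blast
    then show ?thesis using h1 by blast
  next
    case False
    then show ?thesis using h2 h1 by blast
  qed
qed

lemma timer_expires:
  assumes "i < n" "i \<notin> F" "tmr (loc (s k) i) j \<noteq> Idle"
  shows "\<exists>k'\<ge>k. tmr (loc (s k') i) j = Expired"
proof (cases "tmr (loc (s k) i) j")
  case Running then show ?thesis using fair_tmr assms by blast
qed (use assms in auto)

lemma progress:
  assumes "i < n" "i \<notin> F" "P \<le> pos (loc (s k) i)"
    "pos (loc (s k) i) = P \<Longrightarrow> \<exists>s'. local_step n t k i (s k) s'"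
  shows "\<exists>k'. P < pos (loc (s k') i)"
proof (cases "pos (loc (s k) i) = P")
  case True
  then obtain s' where "local_step n t k i (s k) s'" using assms(4) by blast
  then obtain k' where k': "k' \<ge> k" "a k' = Local i" using fair_loc assms(1,2) by blast
  have ge: "P \<le> pos (loc (s k') i)" using pos_mono[OF k'(1), of i] True by simp
  show ?thesis
  proof (cases "pos (loc (s k') i) = P")
    case True
    have "pos (loc (s k') i) < pos (loc (s (Suc k')) i)"
      using local_step_effect(1)[OF step_effect(5)[OF stp k'(2)]] .
    then show ?thesis using True by blast
  next
    case False then show ?thesis using ge by (intro exI[of _ k']) simp
  qed
next
  case False then show ?thesis using assms(3) by (intro exI[of _ k]) simp
qed

definition NF where "NF = {i. i < n \<and> i \<notin> F}"

lemma NF_finite: "finite NF" unfolding NF_def by simp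

lemma NF_card: "n - t \<le> card NF"
proof -
  have "NF = {..<n} - F" unfolding NF_def by auto
  then have "card NF = n - card F" using Fsub by (simp add: card_Diff_subset finite_subset)
  then show ?thesis using cF by simp
qed

lemma par1: "1 - (\<rho>::nat) mod 2 = Suc \<rho> mod 2" by (cases "even \<rho>") (auto simp: mod_Suc)
lemma par2: "(\<rho>::nat) mod 2 \<noteq> Suc \<rho> mod 2" by (cases "even \<rho>") (auto simp: mod_Suc)
lemma par3: "1 \<le> (\<rho>::nat) \<Longrightarrow> (\<rho> - 1) mod 2 \<noteq> \<rho> mod 2" by (cases \<rho>) (simp_all add: par2)
lemma par4: "1 \<le> (\<rho>::nat) \<Longrightarrow> 1 - (\<rho> - 1) mod 2 = \<rho> mod 2" 
proof (cases \<rho>)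
  case (Suc m) then show ?thesis using par1[of m] by simp
qed simp

lemma is_valid_ge2: "2 \<le> r \<Longrightarrow> is_valid n t r est ps = (if est = (r - 1) mod 2 then (r = 2 \<and> t + 1 \<le> card (signers ps 0 ((r - 1) mod 2))) \<or> n - t \<le> card (signers ps (r - 2) ((r - 1) mod 2))
    else n - t \<le> card (signers ps (r - 1) (1 - (r - 1) mod 2)))"
  unfolding is_valid_def Let_def by simp

lemma vv_intro: "S \<subseteq> A \<Longrightarrow> finite S \<Longrightarrow> is_valid n t r w S \<Longrightarrow> w \<le> 1 \<Longrightarrow> valid_vals n t r A \<noteq> {}"
  unfolding valid_vals_def by blast

lemma signers_image: "signers ((\<lambda>j. AUX j r w) ` J) r w = J"
  unfolding signers_def by auto

lemma VV:
  assumes sent: "\<forall>j\<in>NF. \<exists>k x. AUX j \<rho> x \<in> sigs (s k)" and i: "i < n" "i \<notin> F"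
  shows "\<exists>K. valid_vals n t (Suc \<rho>) (auxv (loc (s K) i)) \<noteq> {}"
proof -
  have "\<forall>j\<in>NF. \<exists>xp. is_valid n t \<rho> (fst xp) (snd xp) \<and> finite (snd xp) \<and> fst xp \<le> 1 \<and>
      (\<exists>k. insert (AUX j \<rho> (fst xp)) (needed \<rho> (fst xp) (snd xp)) \<subseteq> auxv (loc (s k) i))"
  proof
    fix j assume "j \<in> NF"
    then obtain k x where kx: "AUX j \<rho> x \<in> sigs (s k)" using sent by blast
    then have "x \<le> 1" using ginvD(2)[OF INV kx] unfolding wf_signed_def by simp
    moreover obtain ps k' where "is_valid n t \<rho> x ps" "finite ps"
      "insert (AUX j \<rho> x) (needed \<rho> x ps) \<subseteq> auxv (loc (s k') i)"
      using sig_delivered[OF kx i] by blast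
    ultimately show "\<exists>xp. is_valid n t \<rho> (fst xp) (snd xp) \<and> finite (snd xp) \<and> fst xp \<le> 1 \<and>
      (\<exists>k. insert (AUX j \<rho> (fst xp)) (needed \<rho> (fst xp) (snd xp)) \<subseteq> auxv (loc (s k) i))"
      by (intro exI[of _ "(x, ps)"]) auto
  qed
  then obtain f where f: "\<forall>j\<in>NF. is_valid n t \<rho> (fst (f j)) (snd (f j)) \<and> finite (snd (f j)) \<and> fst (f j) \<le> 1 \<and>
      (\<exists>k. insert (AUX j \<rho> (fst (f j))) (needed \<rho> (fst (f j)) (snd (f j))) \<subseteq> auxv (loc (s k) i))"
    by (rule bchoice[elim_format]) blast
  define xf where "xf j = fst (f j)" for j
  define psf where "psf j = snd (f j)" for j
  have f1: "\<And>j. j \<in> NF \<Longrightarrow> is_valid n t \<rho> (xf j) (psf j) \<and> finite (psf j) \<and> xf j \<le> 1"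
    using f unfolding xf_def psf_def by blast
  have "\<forall>j\<in>NF. \<exists>k. insert (AUX j \<rho> (xf j)) (needed \<rho> (xf j) (psf j)) \<subseteq> auxv (loc (s k) i)"
    using f unfolding xf_def psf_def by blast
  moreover have "insert (AUX j \<rho> (xf j)) (needed \<rho> (xf j) (psf j)) \<subseteq> auxv (loc (s k') i)"
    if "insert (AUX j \<rho> (xf j)) (needed \<rho> (xf j) (psf j)) \<subseteq> auxv (loc (s k) i)" "k \<le> k'" for j k k'
    using that(1) auxv_mono[OF that(2), of i] by (rule subset_trans)
  ultimately obtain K where K: "\<forall>j\<in>NF. insert (AUX j \<rho> (xf j)) (needed \<rho> (xf j) (psf j)) \<subseteq> auxv (loc (s K) i)"
    using eventually_all[OF NF_finite, of "\<lambda>j k. insert (AUX j \<rho> (xf j)) (needed \<rho> (xf j) (psf j)) \<subseteq> auxv (loc (s k) i)"]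
    by blast
  let ?A = "auxv (loc (s K) i)"
  show ?thesis
  proof (cases "\<rho> = 0")
    case True
    define J0 where "J0 = {j\<in>NF. xf j = 0}"
    define J1 where "J1 = {j\<in>NF. xf j = 1}"
    have x01: "xf j = 0 \<or> xf j = 1" if "j \<in> NF" for j using f1[OF that] by auto
    have "NF = J0 \<union> J1" unfolding J0_def J1_def using x01 by blast
    moreover have "J0 \<inter> J1 = {}" unfolding J0_def J1_def by auto
    moreover have "finite J0" "finite J1" using NF_finite unfolding J0_def J1_def by auto
    ultimately have "card NF = card J0 + card J1" by (simp add: card_Un_disjoint)
    then have c01: "t + 1 \<le> card J0 \<or> t + 1 \<le> card J1" using NF_card nt by linarith
    have "\<exists>w J. w \<le> 1 \<and> J \<subseteq> NF \<and> (\<forall>j\<in>J. xf j = w) \<and> t + 1 \<le> card J"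
    proof (cases "t + 1 \<le> card J0")
      case True then show ?thesis by (intro exI[of _ 0] exI[of _ J0]) (auto simp: J0_def)
    next
      case False then have "t + 1 \<le> card J1" using c01 by simp
      then show ?thesis by (intro exI[of _ 1] exI[of _ J1]) (auto simp: J1_def)
    qed
    then obtain w J where wJ: "w \<le> 1" "J \<subseteq> NF" "\<forall>j\<in>J. xf j = w" "t + 1 \<le> card J" by blast
    let ?S = "(\<lambda>j. AUX j 0 w) ` J"
    have s1: "?S \<subseteq> ?A" using K wJ(2,3) True by auto
    have s2: "finite ?S" using wJ(2) NF_finite finite_subset by blast
    have s3: "is_valid n t (Suc \<rho>) w ?S" unfolding is_valid_def using wJ(4) signers_image True by simp
    show ?thesis by (rule exI[of _ K], rule vv_intro[OF s1 s2 s3 wJ(1)])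
  next
    case False
    then have r1: "1 \<le> \<rho>" by simp
    show ?thesis
    proof (cases "\<forall>j\<in>NF. xf j = Suc \<rho> mod 2")
      case True
      let ?w = "Suc \<rho> mod 2"
      let ?S = "(\<lambda>j. AUX j \<rho> ?w) ` NF"
      have s1: "?S \<subseteq> ?A" using K True by auto
      have s2: "finite ?S" using NF_finite by blast
      have sg: "signers ?S \<rho> ?w = NF" by (rule signers_image)
      have s3: "is_valid n t (Suc \<rho>) ?w ?S"
        unfolding is_valid_def Let_def using r1 par1[of \<rho>] par2[of \<rho>] sg NF_card
        by simp
      have w1: "?w \<le> 1" by simp
      show ?thesis by (rule exI[of _ K], rule vv_intro[OF s1 s2 s3 w1])
    next
      case False
      then obtain j where j: "j \<in> NF" "xf j \<noteq> Suc \<rho> mod 2" by blast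
      have xj: "xf j = \<rho> mod 2" using j(2) f1[OF j(1)] par1[of \<rho>] mod_less_divisor[of 2 \<rho>] by linarith
      have v1: "is_valid n t \<rho> (xf j) (psf j)" and fin: "finite (psf j)" and xl: "xf j \<le> 1" using f1[OF j(1)] by auto
      have nA: "needed \<rho> (xf j) (psf j) \<subseteq> ?A" using K j(1) by blast
      have s2: "finite (needed \<rho> (xf j) (psf j))" by (rule finite_subset[OF needed_sub fin])
      show ?thesis
      proof (cases "\<rho> = 1")
        case True
        then have x1: "xf j = 1" using xj by simp
        have c: "t + 1 \<le> card (signers (psf j) 0 1)" using v1 True x1 unfolding is_valid_def by simp
        have e: "needed \<rho> (xf j) (psf j) = {m \<in> psf j. rnd m = 0 \<and> vl m = 1}" unfolding needed_def True x1 by simp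
        have sg: "signers (needed \<rho> (xf j) (psf j)) 0 1 = signers (psf j) 0 1" unfolding e signers_def by auto
        have r3: "2 \<le> Suc \<rho>" using True by simp
        have q: "(Suc \<rho> - 1) mod 2 = xf j" using True x1 by simp
        have q0: "Suc \<rho> = 2" using True by simp
        have s3: "is_valid n t (Suc \<rho>) (xf j) (needed \<rho> (xf j) (psf j))"
          unfolding is_valid_ge2[OF r3] q
          apply (simp only: if_P[OF refl])
          apply (rule disjI1)
          using q0 sg c x1 by simp
        show ?thesis by (rule exI[of _ K], rule vv_intro[OF nA s2 s3 xl])
      next
        case False
        then have r2: "2 \<le> \<rho>" using r1 by simp
        have p3: "xf j \<noteq> (\<rho> - 1) mod 2" using par3[OF r1] xj by (simp only: not_False_eq_True)
        have p4: "1 - (\<rho> - 1) mod 2 = xf j" using par4[OF r1] xj by (simp only:)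
        have c: "n - t \<le> card (signers (psf j) (\<rho> - 1) (xf j))"
          using v1 unfolding is_valid_ge2[OF r2] by (simp only: if_not_P[OF p3] p4)
        have e: "needed \<rho> (xf j) (psf j) = {m \<in> psf j. rnd m = \<rho> - 1 \<and> vl m = xf j}"
          using r2 p3 unfolding needed_def by (simp only: if_not_P[OF p3]) auto
        have sg: "signers (needed \<rho> (xf j) (psf j)) (\<rho> - 1) (xf j) = signers (psf j) (\<rho> - 1) (xf j)" unfolding e signers_def by auto
        have r3: "2 \<le> Suc \<rho>" using r2 by simp
        have q1: "(Suc \<rho> - 1) mod 2 = xf j" using xj by simp
        have q2: "Suc \<rho> - 2 = \<rho> - 1" by simp
        have s3: "is_valid n t (Suc \<rho>) (xf j) (needed \<rho> (xf j) (psf j))"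
          unfolding is_valid_ge2[OF r3] q1 q2 using c sg by simp
        show ?thesis by (rule exI[of _ K], rule vv_intro[OF nA s2 s3 xl])
      qed
    qed
  qed
qed

lemma NF_iff: "i \<in> NF \<longleftrightarrow> i < n \<and> i \<notin> F" unfolding NF_def by simp

lemma pos_init: "pos (loc (s 0) i) = 4"
  using s0 unfolding init_def pos_def by simp

lemma rounds: "(\<forall>i\<in>NF. \<exists>k. 4 * \<rho> + 4 \<le> pos (loc (s k) i)) \<and> (\<forall>i\<in>NF. \<exists>k x. AUX i \<rho> x \<in> sigs (s k))"
proof (induction \<rho>)
  case 0
  have "\<forall>i\<in>NF. \<exists>k. 4 * 0 + 4 \<le> pos (loc (s k) i)" using pos_init by (metis add_0 mult_0_right order_refl)
  moreover have "\<forall>i\<in>NF. \<exists>k x. AUX i 0 x \<in> sigs (s k)"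
  proof
    fix i assume "i \<in> NF"
    then have "AUX i 0 (v i) \<in> sigs (s 0)" using s0 unfolding NF_def init_def by auto
    then show "\<exists>k x. AUX i 0 x \<in> sigs (s k)" by blast
  qed
  ultimately show ?case by blast
next
  case (Suc \<rho>)
  have D: "\<forall>i\<in>NF. \<exists>k. 4 * \<rho> + 4 \<le> pos (loc (s k) i)" and Sn: "\<forall>i\<in>NF. \<exists>k x. AUX i \<rho> x \<in> sigs (s k)"
    using Suc.IH by blast+
  have VVi: "\<exists>K. valid_vals n t (Suc \<rho>) (auxv (loc (s K) i)) \<noteq> {}" if "i \<in> NF" for i
    using VV[OF Sn] that unfolding NF_def by blast
  have vmono: "valid_vals n t r (auxv (loc (s K) i)) \<noteq> {} \<Longrightarrow> K \<le> k \<Longrightarrow> valid_vals n t r (auxv (loc (s k) i)) \<noteq> {}" for r K k i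
    using valid_vals_mono[OF auxv_mono] by blast
  have b: "\<exists>k. 4 * \<rho> + 4 < pos (loc (s k) i)" if i: "i \<in> NF" for i
  proof -
    obtain k1 where k1: "4 * \<rho> + 4 \<le> pos (loc (s k1) i)" using D i by blast
    obtain K where K: "valid_vals n t (Suc \<rho>) (auxv (loc (s K) i)) \<noteq> {}" using VVi[OF i] by blast
    let ?m = "max k1 K"
    have ge: "4 * \<rho> + 4 \<le> pos (loc (s ?m) i)" using k1 pos_mono[of k1 ?m i] by simp
    show ?thesis
    proof (rule progress[OF _ _ ge])
      show "i < n" "i \<notin> F" using i NF_iff by auto
      assume "pos (loc (s ?m) i) = 4 * \<rho> + 4"
      then have rp: "rd (loc (s ?m) i) = \<rho>" "pc (loc (s ?m) i) = PStart" using pos_cases(1) by blast+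
      have "valid_vals n t (Suc \<rho>) (auxv (loc (s ?m) i)) \<noteq> {}" using vmono[OF K] by simp
      then show "\<exists>s'. local_step n t ?m i (s ?m) s'" using enabled_start rp by simp
    qed
  qed
  have c: "\<exists>k. 4 * \<rho> + 5 < pos (loc (s k) i)" if i: "i \<in> NF" for i
  proof -
    have iF: "i < n" "i \<notin> F" using i NF_iff by auto
    obtain k2 where k2: "4 * \<rho> + 4 < pos (loc (s k2) i)" using b[OF i] by blast
    obtain K where K: "valid_vals n t (Suc \<rho>) (auxv (loc (s K) i)) \<noteq> {}" using VVi[OF i] by blast
    let ?m = "max k2 K"
    have ge: "4 * \<rho> + 5 \<le> pos (loc (s ?m) i)" using k2 pos_mono[of k2 ?m i] by simp
    show ?thesis
    proof (cases "pos (loc (s ?m) i) = 4 * \<rho> + 5")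
      case False then show ?thesis using ge by (intro exI[of _ ?m]) simp
    next
      case True
      then have rp: "rd (loc (s ?m) i) = Suc \<rho>" "pc (loc (s ?m) i) = PWait1" using pos_cases(2) by blast+
      then have "tmr (loc (s ?m) i) (2 * Suc \<rho>) \<noteq> Idle" using procinv_at[OF iF, of ?m] unfolding procinv_def by auto
      then obtain k3 where k3: "k3 \<ge> ?m" "tmr (loc (s k3) i) (2 * Suc \<rho>) = Expired" using timer_expires[OF iF] by blast
      have ge3: "4 * \<rho> + 5 \<le> pos (loc (s k3) i)" using ge pos_mono[OF k3(1), of i] by simp
      show ?thesis
      proof (rule progress[OF iF ge3])
        assume "pos (loc (s k3) i) = 4 * \<rho> + 5"
        then have rp3: "rd (loc (s k3) i) = Suc \<rho>" "pc (loc (s k3) i) = PWait1" using pos_cases(2) by blast+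
        have "valid_vals n t (Suc \<rho>) (auxv (loc (s k3) i)) \<noteq> {}" using vmono[OF K] k3(1) by simp
        then show "\<exists>s'. local_step n t k3 i (s k3) s'" using enabled_w1 rp3 k3(2) by simp
      qed
    qed
  qed
  have d: "\<exists>k x. AUX i (Suc \<rho>) x \<in> sigs (s k)" if i: "i \<in> NF" for i
  proof -
    have iF: "i < n" "i \<notin> F" using i NF_iff by auto
    obtain k where k0: "4 * \<rho> + 5 < pos (loc (s k) i)" using c[OF i] by blast
    then have k: "4 * \<rho> + 6 \<le> pos (loc (s k) i)" by simp
    have pi: "procinv n t F (sigs (s k)) i (loc (s k) i)" using procinv_at[OF iF] .
    from pos_cases(5)[OF k] show ?thesis
    proof
      assume "Suc \<rho> < rd (loc (s k) i)"
      then show ?thesis using pi unfolding procinv_def by blast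
    next
      assume "Suc \<rho> = rd (loc (s k) i) \<and> pc (loc (s k) i) \<noteq> PWait1"
      then show ?thesis using pi unfolding procinv_def by auto
    qed
  qed
  have e: "\<exists>K. n - t \<le> card (rsigners (auxv (loc (s K) i)) (Suc \<rho>))" if i: "i \<in> NF" for i
  proof -
    have iF: "i < n" "i \<notin> F" using i NF_iff by auto
    have ex: "\<forall>j\<in>NF. \<exists>k. j \<in> rsigners (auxv (loc (s k) i)) (Suc \<rho>)"
    proof
      fix j assume "j \<in> NF"
      then obtain k x where "AUX j (Suc \<rho>) x \<in> sigs (s k)" using d by blast
      then obtain ps k' where "insert (AUX j (Suc \<rho>) x) (needed (Suc \<rho>) x ps) \<subseteq> auxv (loc (s k') i)"
        using sig_delivered[OF _ iF] by blast
      then show "\<exists>k. j \<in> rsigners (auxv (loc (s k) i)) (Suc \<rho>)" unfolding rsigners_def by blast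
    qed
    have mono: "j \<in> rsigners (auxv (loc (s k') i)) (Suc \<rho>)" if "j \<in> rsigners (auxv (loc (s k) i)) (Suc \<rho>)" "k \<le> k'" for j k k'
      using that auxv_mono[OF that(2), of i] unfolding rsigners_def by blast
    obtain K where K: "\<forall>j\<in>NF. j \<in> rsigners (auxv (loc (s K) i)) (Suc \<rho>)"
      using eventually_all[OF NF_finite ex] mono by blast
    have g: "Good n F (sigs (s K)) (auxv (loc (s K) i))" using procinv_at[OF iF] unfolding procinv_def by blast
    have "card NF \<le> card (rsigners (auxv (loc (s K) i)) (Suc \<rho>))"
    proof (rule card_mono)
      show "finite (rsigners (auxv (loc (s K) i)) (Suc \<rho>))"
        by (rule finite_subset[OF rsigners_sub[OF g]]) simp
    qed (use K in auto)
    then show ?thesis using NF_card by (intro exI[of _ K]) simp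
  qed
  have f: "\<exists>k. 4 * \<rho> + 6 < pos (loc (s k) i)" if i: "i \<in> NF" for i
  proof -
    have iF: "i < n" "i \<notin> F" using i NF_iff by auto
    obtain k2 where k2: "4 * \<rho> + 5 < pos (loc (s k2) i)" using c[OF i] by blast
    obtain K where K: "n - t \<le> card (rsigners (auxv (loc (s K) i)) (Suc \<rho>))" using e[OF i] by blast
    let ?m = "max k2 K"
    have ge: "4 * \<rho> + 6 \<le> pos (loc (s ?m) i)" using k2 pos_mono[of k2 ?m i] by simp
    show ?thesis
    proof (rule progress[OF iF ge])
      assume "pos (loc (s ?m) i) = 4 * \<rho> + 6"
      then have rp: "rd (loc (s ?m) i) = Suc \<rho>" "pc (loc (s ?m) i) = PWait2" using pos_cases(3) by blast+
      have g: "Good n F (sigs (s ?m)) (auxv (loc (s ?m) i))" using procinv_at[OF iF] unfolding procinv_def by blast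
      have "card (rsigners (auxv (loc (s K) i)) (Suc \<rho>)) \<le> card (rsigners (auxv (loc (s ?m) i)) (Suc \<rho>))"
        by (rule card_rsigners_mono[OF g auxv_mono]) simp
      then show "\<exists>s'. local_step n t ?m i (s ?m) s'" using enabled_w2 rp K by simp
    qed
  qed
  have g: "\<exists>k. 4 * \<rho> + 7 < pos (loc (s k) i)" if i: "i \<in> NF" for i
  proof -
    have iF: "i < n" "i \<notin> F" using i NF_iff by auto
    obtain m where k2: "4 * \<rho> + 6 < pos (loc (s m) i)" using f[OF i] by blast
    have ge: "4 * \<rho> + 7 \<le> pos (loc (s m) i)" using k2 by simp
    show ?thesis
    proof (cases "pos (loc (s m) i) = 4 * \<rho> + 7")
      case False then show ?thesis using ge by (intro exI[of _ m]) simp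
    next
      case True
      then have rp: "rd (loc (s m) i) = Suc \<rho>" "pc (loc (s m) i) = PWait3" using pos_cases(4) by blast+
      then have "tmr (loc (s m) i) (2 * Suc \<rho> + 1) \<noteq> Idle" using procinv_at[OF iF, of m] unfolding procinv_def by auto
      then obtain k3 where k3: "k3 \<ge> m" "tmr (loc (s k3) i) (2 * Suc \<rho> + 1) = Expired" using timer_expires[OF iF] by blast
      have ge3: "4 * \<rho> + 7 \<le> pos (loc (s k3) i)" using ge pos_mono[OF k3(1), of i] by simp
      show ?thesis
      proof (rule progress[OF iF ge3])
        assume "pos (loc (s k3) i) = 4 * \<rho> + 7"
        then have rp3: "rd (loc (s k3) i) = Suc \<rho>" "pc (loc (s k3) i) = PWait3" using pos_cases(4) by blast+
        then show "\<exists>s'. local_step n t k3 i (s k3) s'" using enabled_w3 k3(2) by simp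
      qed
    qed
  qed
  have "\<forall>i\<in>NF. \<exists>k. 4 * Suc \<rho> + 4 \<le> pos (loc (s k) i)"
  proof
    fix i assume "i \<in> NF"
    then obtain k where "4 * \<rho> + 7 < pos (loc (s k) i)" using g by blast
    then show "\<exists>k. 4 * Suc \<rho> + 4 \<le> pos (loc (s k) i)" by (intro exI[of _ k]) simp
  qed
  then show ?case using d by blast
qed

definition SI where "SI = (\<Union>k. sigs (s k))"

lemma Good_SI: "Good n F (sigs (s k)) X \<Longrightarrow> Good n F SI X"
  unfolding SI_def by (rule Good_mono) auto

lemma SI_uniq:
  assumes "AUX j \<rho> x \<in> SI" "AUX j \<rho> y \<in> SI"
  shows "x = y"
proof -
  obtain k1 k2 where k: "AUX j \<rho> x \<in> sigs (s k1)" "AUX j \<rho> y \<in> sigs (s k2)" using assms unfolding SI_def by blast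
  have "AUX j \<rho> x \<in> sigs (s (max k1 k2))" "AUX j \<rho> y \<in> sigs (s (max k1 k2))"
    using k sigs_mono[of k1 "max k1 k2"] sigs_mono[of k2 "max k1 k2"] by auto
  then show ?thesis using ginvD(4)[OF INV] by blast
qed

lemma SI_just:
  assumes "AUX j \<rho> x \<in> SI"
  shows "\<exists>ps. is_valid n t \<rho> x ps \<and> Good n F SI ps"
proof -
  obtain k where k: "AUX j \<rho> x \<in> sigs (s k)" using assms unfolding SI_def by blast
  then have "sig_ok n t F (s k) j \<rho> x" using ginvD(3)[OF INV] by blast
  then obtain ps where "is_valid n t \<rho> x ps" "Good n F (sigs (s k)) ps" unfolding sig_ok_def by blast
  then show ?thesis using Good_SI by blast
qed

lemma card_minus_F: "finite X \<Longrightarrow> card X - card F \<le> card (X - F)"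
proof -
  assume fx: "finite X"
  have fF: "finite F" using Fsub finite_subset by blast
  have "card X \<le> card (X - F) + card (X \<inter> F)"
    using card_Un_le[of "X - F" "X \<inter> F"] by (simp add: Un_Diff_Int)
  moreover have "card (X \<inter> F) \<le> card F" using fF by (simp add: card_mono)
  ultimately show ?thesis by linarith
qed

lemma sep_r: "4 * x + 4 \<le> 4 * r + 11 \<Longrightarrow> 4 * r + 11 < 4 * x + 5 \<Longrightarrow> False" for x r :: nat
  by (cases "x \<le> r + 1") auto
lemma sep_1: "4 * x + 1 \<le> 4 * r + 11 \<Longrightarrow> 4 * r + 11 < 4 * x + 2 \<Longrightarrow> False" for x r :: nat
  by (cases "x \<le> r + 2") auto
lemma sep_2: "4 * x + 2 \<le> 4 * r + 11 \<Longrightarrow> 4 * r + 11 < 4 * x + 3 \<Longrightarrow> False" for x r :: nat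
  by (cases "x \<le> r + 2") auto
lemma sep_3: "4 * x + 3 \<le> 4 * r + 11 \<Longrightarrow> 4 * r + 11 < 4 * x + 4 \<Longrightarrow> x = r + 2" for x r :: nat
  by (cases "x \<le> r + 1"; cases "x \<le> r + 2") auto

end

locale dexec = exec +
  fixes r p k0 :: nat
  assumes p: "p < n" "p \<notin> F" and dec: "decided (loc (s k0) p) = Some r"
begin

definition b where "b = r mod 2"

lemma b1: "b \<le> 1" unfolding b_def by simp
lemma bne: "1 - b \<noteq> b"
proof -
  have "r mod 2 = 0 \<or> r mod 2 = 1" by auto
  then show ?thesis unfolding b_def by auto
qed

lemma r1: "1 \<le> r" and cY: "n - t \<le> card (signers (auxv (loc (s k0) p)) r b)"
  and GY: "Good n F SI (auxv (loc (s k0) p))"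
proof -
  have pi: "procinv n t F (sigs (s k0)) p (loc (s k0) p)" using procinv_at[OF p] .
  show "1 \<le> r" "n - t \<le> card (signers (auxv (loc (s k0) p)) r b)"
    using pi dec unfolding procinv_def b_def by auto
  show "Good n F SI (auxv (loc (s k0) p))" using pi Good_SI unfolding procinv_def by blast
qed

lemma claimA:
  assumes "Good n F SI X"
  shows "card (signers X r (1 - b)) < n - t"
proof (rule ccontr)
  assume "\<not> ?thesis"
  then have cX: "n - t \<le> card (signers X r (1 - b))" by simp
  let ?Y = "auxv (loc (s k0) p)"
  define A where "A = signers ?Y r b - F"
  define B where "B = signers X r (1 - b) - F"
  have fY: "finite (signers ?Y r b)" using signers_sub[OF GY] finite_subset by blast
  have fX: "finite (signers X r (1 - b))" using signers_sub[OF assms] finite_subset by blast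
  have cA: "n - t - card F \<le> card A" unfolding A_def using card_minus_F[OF fY] cY by linarith
  have cB: "n - t - card F \<le> card B" unfolding B_def using card_minus_F[OF fX] cX by linarith
  have disj: "A \<inter> B = {}"
  proof (rule ccontr)
    assume "A \<inter> B \<noteq> {}"
    then obtain j where j: "AUX j r b \<in> ?Y" "AUX j r (1 - b) \<in> X" "j \<notin> F"
      unfolding A_def B_def signers_def by auto
    have "AUX j r b \<in> SI" using GY j(1,3) unfolding Good_def by auto
    moreover have "AUX j r (1 - b) \<in> SI" using assms j(2,3) unfolding Good_def by auto
    ultimately have "b = 1 - b" using SI_uniq by blast
    then show False using bne by simp
  qed
  have fA: "finite A" "finite B" unfolding A_def B_def using fY fX by auto
  have sub: "A \<union> B \<subseteq> {..<n} - F" unfolding A_def B_def using signers_sub[OF GY] signers_sub[OF assms] by blast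
  have "card (A \<union> B) \<le> card ({..<n} - F)" by (rule card_mono) (use sub in auto)
  also have "\<dots> = n - card F" using Fsub by (simp add: card_Diff_subset finite_subset)
  finally have "card A + card B \<le> n - card F" using card_Un_disjoint[OF fA disj] by simp
  then show False using cA cB nt cF by linarith
qed

lemma inval1:
  assumes "is_valid n t (Suc r) (1 - b) ps" "Good n F SI ps"
  shows False
proof -
  have r2: "2 \<le> Suc r" using r1 by simp
  have q: "(Suc r - 1) mod 2 = b" unfolding b_def by simp
  have "n - t \<le> card (signers ps (Suc r - 1) (1 - b))"
    using assms(1) unfolding is_valid_ge2[OF r2] q by (simp only: if_not_P[OF bne])
  then show False using claimA[OF assms(2)] by simp
qed

lemma inval2:
  assumes "is_valid n t (Suc (Suc r)) (1 - b) ps" "Good n F SI ps"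
  shows False
proof -
  have r2: "2 \<le> Suc (Suc r)" by simp
  have q: "(Suc (Suc r) - 1) mod 2 = 1 - b" unfolding b_def using par1[of r] by simp
  have ne: "Suc (Suc r) \<noteq> 2" using r1 by simp
  have "n - t \<le> card (signers ps (Suc (Suc r) - 2) (1 - b))"
    using assms(1) ne unfolding is_valid_ge2[OF r2] q by (simp only: if_P[OF refl]) simp
  then show False using claimA[OF assms(2)] by simp
qed

lemma nosig:
  assumes "\<rho> = Suc r \<or> \<rho> = Suc (Suc r)"
  shows "AUX j \<rho> (1 - b) \<notin> SI"
proof
  assume "AUX j \<rho> (1 - b) \<in> SI"
  then obtain ps where "is_valid n t \<rho> (1 - b) ps" "Good n F SI ps" using SI_just by blast
  then show False using assms inval1 inval2 by blast
qed

lemma nocard: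
  assumes "Good n F SI X" "\<rho> = Suc r \<or> \<rho> = Suc (Suc r)"
  shows "card (signers X \<rho> (1 - b)) < n - t"
proof (rule ccontr)
  assume "\<not> ?thesis"
  then have c: "n - t \<le> card (signers X \<rho> (1 - b))" by simp
  have fF: "finite F" using Fsub finite_subset by blast
  have "\<not> signers X \<rho> (1 - b) \<subseteq> F"
  proof
    assume "signers X \<rho> (1 - b) \<subseteq> F"
    then have "card (signers X \<rho> (1 - b)) \<le> card F" using fF by (simp add: card_mono)
    then show False using c cF nt by linarith
  qed
  then obtain j where j: "AUX j \<rho> (1 - b) \<in> X" "j \<notin> F" unfolding signers_def by auto
  then have "AUX j \<rho> (1 - b) \<in> SI" using assms(1) unfolding Good_def by auto
  then show False using nosig[OF assms(2)] by blast
qed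

lemma auxB:
  assumes i: "i < n" "i \<notin> F" and m: "m \<in> auxv (loc (s k) i)" "rnd m = Suc (Suc r)"
  shows "vl m = b"
proof (rule ccontr)
  assume ne: "vl m \<noteq> b"
  have pi: "procinv n t F (sigs (s k)) i (loc (s k) i)" using procinv_at[OF i] .
  have "vl m \<le> 1" using pi m(1) unfolding procinv_def Good_def wf_signed_def by blast
  then have vm: "vl m = 1 - b" using ne b1 by linarith
  have "justified n t F (sigs (s k)) m" using pi m(1) unfolding procinv_def by blast
  then obtain j \<rho> x ps where v: "is_valid n t \<rho> x ps" and g0: "Good n F (sigs (s k)) ps"
    and mm: "m \<in> insert (AUX j \<rho> x) (needed \<rho> x ps)" unfolding justified_def by blast
  have g: "Good n F SI ps" using Good_SI[OF g0] .
  show False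
  proof (cases "m = AUX j \<rho> x")
    case True
    then have "\<rho> = Suc (Suc r)" "x = 1 - b" using m(2) vm by auto
    then show False using inval2 v g by blast
  next
    case False
    then have mn: "m \<in> needed \<rho> x ps" using mm by blast
    have r0: "\<rho> \<noteq> 0" "\<rho> \<noteq> 1" using mn m(2) unfolding needed_def by (auto split: if_splits)
    then have r2: "2 \<le> \<rho>" by simp
    show False
    proof (cases "x = (\<rho> - 1) mod 2")
      case True
      then have mp: "m \<in> ps" "rnd m = \<rho> - 2" "vl m = x" using mn r0 unfolding needed_def by auto
      then have e: "\<rho> - 2 = Suc (Suc r)" "x = 1 - b" using m(2) vm by auto
      have ne2: "\<rho> \<noteq> 2" using e by simp
      have "n - t \<le> card (signers ps (\<rho> - 2) ((\<rho> - 1) mod 2))"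
        using v ne2 unfolding is_valid_ge2[OF r2] by (simp only: if_P[OF True]) simp
      then have "n - t \<le> card (signers ps (Suc (Suc r)) (1 - b))" using e True by simp
      then show False using nocard[OF g] by fastforce
    next
      case False
      then have mp: "m \<in> ps" "rnd m = \<rho> - 1" "vl m = x" using mn r0 unfolding needed_def by auto
      then have e: "\<rho> - 1 = Suc (Suc r)" "x = 1 - b" using m(2) vm by auto
      have "n - t \<le> card (signers ps (\<rho> - 1) (1 - (\<rho> - 1) mod 2))"
        using v unfolding is_valid_ge2[OF r2] by (simp only: if_not_P[OF False])
      moreover have "1 - (\<rho> - 1) mod 2 = 1 - b" using e(1) unfolding b_def by simp
      ultimately have "n - t \<le> card (signers ps (Suc (Suc r)) (1 - b))" using e(1) by simp
      then show False using nocard[OF g] by fastforce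
    qed
  qed
qed

lemma decR1:
  assumes i: "i < n" "i \<notin> F" and d: "decided (loc (s k) i) = Some (Suc r)"
  shows False
proof -
  have pi: "procinv n t F (sigs (s k)) i (loc (s k) i)" using procinv_at[OF i] .
  have c: "n - t \<le> card (signers (auxv (loc (s k) i)) (Suc r) (Suc r mod 2))" using pi d unfolding procinv_def by blast
  have "Suc r mod 2 = 1 - b" unfolding b_def using par1[of r] by simp
  then have "n - t \<le> card (signers (auxv (loc (s k) i)) (Suc r) (1 - b))" using c by simp
  moreover have "Good n F SI (auxv (loc (s k) i))" using pi Good_SI unfolding procinv_def by blast
  ultimately show False using nocard by fastforce
qed

lemma final:
  assumes i: "i < n" "i \<notin> F" and minr: "\<forall>i k r'. i < n \<and> i \<notin> F \<and> decided (loc (s k) i) = Some r' \<longrightarrow> r \<le> r'"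
  shows "\<exists>k. decided (loc (s k) i) = Some r \<or> decided (loc (s k) i) = Some (r + 2)"
proof -
  have "i \<in> NF" using i NF_iff by simp
  then obtain k where k: "4 * (r + 2) + 4 \<le> pos (loc (s k) i)" using rounds[of "r + 2"] by blast
  have f0: "pos (loc (s 0) i) \<le> 4 * r + 11" using pos_init by simp
  have fk: "4 * r + 11 < pos (loc (s k) i)" using k by simp
  obtain j where j: "pos (loc (s j) i) \<le> 4 * r + 11" "4 * r + 11 < pos (loc (s (Suc j)) i)"
    using crossing[of "\<lambda>k. pos (loc (s k) i)", OF f0 fk] by blast
  have aj: "a j = Local i"
  proof (rule ccontr)
    assume "a j \<noteq> Local i"
    then have "pos (loc (s (Suc j)) i) = pos (loc (s j) i)" using step_effect(4)[OF stp] unfolding pos_def by simp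
    then show False using j by simp
  qed
  have ls: "local_step n t j i (s j) (s (Suc j))" using step_effect(5)[OF stp aj] .
  let ?l = "loc (s j) i"
  have pi: "procinv n t F (sigs (s j)) i ?l" using procinv_at[OF i] .
  from ls show ?thesis
  proof (cases rule: local_step_cases)
    case (S1 est ps)
    then show ?thesis using j sep_r[of "rd ?l" r] unfolding pos_def by simp
  next
    case S2
    then show ?thesis using j sep_r[of "rd ?l" r] unfolding pos_def by simp
  next
    case (W1a est ps)
    then show ?thesis using j sep_1[of "rd ?l" r] unfolding pos_def by simp
  next
    case W1b
    then show ?thesis using j sep_1[of "rd ?l" r] unfolding pos_def by simp
  next
    case W2
    then show ?thesis using j sep_2[of "rd ?l" r] unfolding pos_def by simp
  next
    case W3
    have rr: "rd ?l = Suc (Suc r)" using j sep_3[of "rd ?l" r] W3 unfolding pos_def by simp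
    have c4: "n - t \<le> card (rsigners (auxv ?l) (rd ?l))" using pi W3(1) unfolding procinv_def by blast
    have g: "Good n F (sigs (s j)) (auxv ?l)" using pi unfolding procinv_def by blast
    have sub: "rsigners (auxv ?l) (rd ?l) \<subseteq> signers (auxv ?l) (rd ?l) (rd ?l mod 2)"
    proof
      fix x assume "x \<in> rsigners (auxv ?l) (rd ?l)"
      then obtain w where w: "AUX x (rd ?l) w \<in> auxv ?l" unfolding rsigners_def by blast
      then have "w = b" using auxB[OF i w] rr by simp
      moreover have "rd ?l mod 2 = b" using rr unfolding b_def by simp
      ultimately show "x \<in> signers (auxv ?l) (rd ?l) (rd ?l mod 2)" using w unfolding signers_def by simp
    qed
    have "card (rsigners (auxv ?l) (rd ?l)) \<le> card (signers (auxv ?l) (rd ?l) (rd ?l mod 2))"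
      by (rule card_mono[OF finite_subset[OF signers_sub[OF g]] sub]) simp
    then have cond: "n - t \<le> card (signers (auxv ?l) (rd ?l) (rd ?l mod 2))" using c4 by linarith
    show ?thesis
    proof (cases "decided ?l")
      case None
      then have "decided (loc (s (Suc j)) i) = Some (r + 2)" using W3(3) cond rr by simp
      then show ?thesis by blast
    next
      case (Some \<rho>')
      then have d1: "decided (loc (s (Suc j)) i) = Some \<rho>'" using W3(3) by simp
      have "\<rho>' \<le> rd ?l" using pi Some unfolding procinv_def by blast
      moreover have "r \<le> \<rho>'" using minr i Some by blast
      moreover have "\<rho>' \<noteq> Suc r" using decR1[OF i] Some by blast
      ultimately have "\<rho>' = r \<or> \<rho>' = r + 2" using rr by linarith
      then show ?thesis using d1 by blast
    qed
  qed
qed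

end


theorem lemma5:
  fixes n t :: nat and F :: "nat set" and v :: "nat \<Rightarrow> nat"
    and s :: "nat \<Rightarrow> gstate" and a :: "nat \<Rightarrow> action" and r :: nat
  assumes "3 * t < n"
    and "F \<subseteq> {..<n}" and "card F \<le> t"
    and "\<forall>i<n. i \<notin> F \<longrightarrow> v i \<le> 1"
    and "fair_execution n t F v s a"
    and "\<exists>i k. i < n \<and> i \<notin> F \<and> decided (loc (s k) i) = Some r"
    and "\<forall>i k r'. i < n \<and> i \<notin> F \<and> decided (loc (s k) i) = Some r' \<longrightarrow> r \<le> r'"
  shows "\<forall>i<n. i \<notin> F \<longrightarrow>
           (\<exists>k. decided (loc (s k) i) = Some r \<or> decided (loc (s k) i) = Some (r + 2))"
proof -
  obtain p k0 where p: "p < n" "p \<notin> F" "decided (loc (s k0) p) = Some r" using assms(6) by blast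
  interpret dexec n t F v s a r p k0 by unfold_locales (use assms p in auto)
  show ?thesis using final assms(7) by blast
qed

end
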